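(* Let $A\in\mathbb{R}^{n\times n}$ and $C_i\in\mathbb{R}^{s_i\times n}$, $i\in\mathbf{m}=\{1,\dots,m\}$, $m>1$, and suppose the system $\dot x=Ax$, $y_i=C_ix$ is jointly observable. Let $\mathcal{P}$ be a finite index set and, for each $p\in\mathcal{P}$, let $\mathbb{N}(p)$ be a strongly connected directed graph on the vertex set $\mathbf{m}$ with a self-loop at each vertex, such that the matrix $S(p)$ is doubly stochastic. Let $\lambda>0$. Then there exist matrices $K_i\in\mathbb{R}^{n\times s_i}$, $i\in\mathbf{m}$, and a number $g_0>0$ such that for every $g\ge g_0$ there is a constant $c>0$ with the following property: for every switching signal $\sigma:[0,\infty)\to\mathcal{P}$ (no dwell-time restriction), every initial state $x(0)$ and all initial estimator states $x_i(0)$, the solutions of the system and of the distributed observer $$\dot{x}_i = (A+K_iC_i)x_i -K_iy_i -gP_i\Big(x_i-\frac{1}{m_i(\sigma(t))}\sum_{j\in\mathcal{N}_i(\sigma(t))} x_j\Big),\quad i\in\mathbf{m},$$ satisfy $\|e(t)\|\le c\,e^{-\lambda t}\|e(0)\|$ for all $t\ge0$, where $e=\mathrm{column}\{x_1-x,\dots,x_m-x\}$.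
   Context: Joint observability means the pair $(C,A)$ with $C=[C_1'\ \cdots\ C_m']'$ is observable, equivalently $\bigcap_{i}\mathcal{V}_i=0$, where $\mathcal{V}_i$ is the unobservable subspace of $(C_i,A)$ (the largest $A$-invariant subspace contained in $\ker C_i$). $P_i$ denotes the orthogonal projection onto $\mathcal{V}_i$. For $p\in\mathcal{P}$, $\mathcal{N}_i(p)$ is the set of $j$ such that there is an arc from $j$ to $i$ in $\mathbb{N}(p)$ (so $i\in\mathcal{N}_i(p)$), and $m_i(p)$ is the number of elements of $\mathcal{N}_i(p)$. $S(p)=D_{\mathbb{N}(p)}^{-1}A_{\mathbb{N}(p)}'$, where $A_{\mathbb{N}(p)}$ is the adjacency matrix of $\mathbb{N}(p)$ (entry $(j,i)$ equal to 1 iff there is an arc from $j$ to $i$) and $D_{\mathbb{N}(p)}$ is the diagonal matrix of in-degrees; thus $S(p)_{ij}=1/m_i(p)$ if $j\in\mathcal{N}_i(p)$ and $0$ otherwise. Doubly stochastic means all row sums and all column sums equal 1. A switching signal is a piecewise-constant, right-continuous map $\sigma:[0,\infty)\to\mathcal{P}$ with finitely many discontinuities on each bounded interval. $g>0$ is a scalar gain. *)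

theory Defs
  imports "HOL-Analysis.Analysis"
begin

text \<open>Agents are indexed by {0..<m} (the paper's {1..m}).
  The output matrix C_i (of size s_i x n) is given by its rows C i k, k < s i;
  the gain K_i (of size n x s_i) is given by its columns K i k, k < s i.\<close>

definition out_map :: "(nat \<Rightarrow> nat \<Rightarrow> real^'n) \<Rightarrow> (nat \<Rightarrow> nat) \<Rightarrow> nat \<Rightarrow> real^'n \<Rightarrow> (nat \<Rightarrow> real)" where
  "out_map C s i x = (\<lambda>k. if k < s i then C i k \<bullet> x else 0)"

definition gain_map :: "(nat \<Rightarrow> nat \<Rightarrow> real^'n) \<Rightarrow> (nat \<Rightarrow> nat) \<Rightarrow> nat \<Rightarrow> (nat \<Rightarrow> real) \<Rightarrow> real^'n" where
  "gain_map K s i y = (\<Sum>k<s i. y k *\<^sub>R K i k)"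

definition A_invariant :: "real^'n^'n \<Rightarrow> (real^'n) set \<Rightarrow> bool" where
  "A_invariant A V \<longleftrightarrow> (\<forall>x\<in>V. A *v x \<in> V)"

definition largest_inv_subspace :: "real^'n^'n \<Rightarrow> (real^'n) set \<Rightarrow> (real^'n) set" where
  "largest_inv_subspace A W = span (\<Union>{V. subspace V \<and> A_invariant A V \<and> V \<subseteq> W})"

definition unobs :: "real^'n^'n \<Rightarrow> (nat \<Rightarrow> nat \<Rightarrow> real^'n) \<Rightarrow> (nat \<Rightarrow> nat) \<Rightarrow> nat \<Rightarrow> (real^'n) set" where
  "unobs A C s i = largest_inv_subspace A {x. out_map C s i x = (\<lambda>_. 0)}"

text \<open>Joint observability: (C, A) observable with C the stacked matrix, i.e. the
  unobservable subspace of (C, A) (largest A-invariant subspace in ker C) is zero.\<close>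
definition jointly_observable :: "real^'n^'n \<Rightarrow> (nat \<Rightarrow> nat \<Rightarrow> real^'n) \<Rightarrow> (nat \<Rightarrow> nat) \<Rightarrow> nat \<Rightarrow> bool" where
  "jointly_observable A C s m \<longleftrightarrow>
     largest_inv_subspace A {x. \<forall>i<m. out_map C s i x = (\<lambda>_. 0)} = {0}"

definition orth_proj :: "(real^'n) set \<Rightarrow> real^'n \<Rightarrow> real^'n" where
  "orth_proj V x = (THE p. p \<in> V \<and> (\<forall>v\<in>V. (x - p) \<bullet> v = 0))"

text \<open>Graphs: E p j i means there is an arc from j to i in N(p).\<close>
definition nbrs :: "('p \<Rightarrow> nat \<Rightarrow> nat \<Rightarrow> bool) \<Rightarrow> nat \<Rightarrow> 'p \<Rightarrow> nat \<Rightarrow> nat set" where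
  "nbrs E m p i = {j. j < m \<and> E p j i}"

definition arcs :: "('p \<Rightarrow> nat \<Rightarrow> nat \<Rightarrow> bool) \<Rightarrow> nat \<Rightarrow> 'p \<Rightarrow> (nat \<times> nat) set" where
  "arcs E m p = {(j, i). j < m \<and> i < m \<and> E p j i}"

definition is_graph_on :: "('p \<Rightarrow> nat \<Rightarrow> nat \<Rightarrow> bool) \<Rightarrow> nat \<Rightarrow> 'p \<Rightarrow> bool" where
  "is_graph_on E m p \<longleftrightarrow> (\<forall>j i. E p j i \<longrightarrow> j < m \<and> i < m)"

definition strongly_connected :: "('p \<Rightarrow> nat \<Rightarrow> nat \<Rightarrow> bool) \<Rightarrow> nat \<Rightarrow> 'p \<Rightarrow> bool" where
  "strongly_connected E m p \<longleftrightarrow> (\<forall>i<m. \<forall>j<m. (i, j) \<in> (arcs E m p)\<^sup>*)"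

definition Smat :: "('p \<Rightarrow> nat \<Rightarrow> nat \<Rightarrow> bool) \<Rightarrow> nat \<Rightarrow> 'p \<Rightarrow> nat \<Rightarrow> nat \<Rightarrow> real" where
  "Smat E m p i j = (if j \<in> nbrs E m p i then 1 / real (card (nbrs E m p i)) else 0)"

definition doubly_stochastic :: "nat \<Rightarrow> (nat \<Rightarrow> nat \<Rightarrow> real) \<Rightarrow> bool" where
  "doubly_stochastic m S \<longleftrightarrow>
     (\<forall>i<m. \<forall>j<m. S i j \<ge> 0) \<and>
     (\<forall>i<m. (\<Sum>j<m. S i j) = 1) \<and> (\<forall>j<m. (\<Sum>i<m. S i j) = 1)"

text \<open>Switching signal on [0,oo) with values in P: piecewise constant, right-continuous,
  finitely many switches on every bounded interval.\<close>
definition switching_signal :: "'p set \<Rightarrow> (real \<Rightarrow> 'p) \<Rightarrow> bool" where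
  "switching_signal P \<sigma> \<longleftrightarrow>
     (\<forall>t\<ge>0. \<sigma> t \<in> P) \<and>
     (\<forall>T>0. \<exists>ts::real list. sorted_wrt (<) ts \<and> ts \<noteq> [] \<and> hd ts = 0 \<and> last ts = T \<and>
        (\<forall>k. Suc k < length ts \<longrightarrow> (\<forall>t\<in>{ts ! k ..< ts ! Suc k}. \<sigma> t = \<sigma> (ts ! k))))"

text \<open>Solution of \<dot>z(t) = f t (z t) on [0,oo): continuous, with right derivative
  equal to the right-hand side at every t \<ge> 0 (right-hand sides are right-continuous
  and piecewise continuous in t).\<close>
definition solves_ode :: "(real \<Rightarrow> 'a::real_normed_vector) \<Rightarrow> (real \<Rightarrow> 'a) \<Rightarrow> bool" where
  "solves_ode z dz \<longleftrightarrow> continuous_on {0..} z \<and>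
     (\<forall>t\<ge>0. (z has_vector_derivative dz t) (at t within {t..}))"

definition observer_rhs where
  "observer_rhs A C K s E m g \<sigma> x xs i t =
     A *v xs i t + gain_map K s i (out_map C s i (xs i t)) - gain_map K s i (out_map C s i (x t))
     - g *\<^sub>R orth_proj (unobs A C s i)
         (xs i t - (1 / real (card (nbrs E m (\<sigma> t) i))) *\<^sub>R (\<Sum>j\<in>nbrs E m (\<sigma> t) i. xs j t))"

definition err_norm :: "nat \<Rightarrow> (real \<Rightarrow> real^'n) \<Rightarrow> (nat \<Rightarrow> real \<Rightarrow> real^'n) \<Rightarrow> real \<Rightarrow> real" where
  "err_norm m x xs t = sqrt (\<Sum>i<m. (norm (xs i t - x t))\<^sup>2)"

end

theory Submission
  imports Defs
begin


lemma orth_proj_char: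
  fixes V :: "(real^'n) set"
  assumes "subspace V"
  shows "orth_proj V x \<in> V \<and> (\<forall>v\<in>V. (x - orth_proj V x) \<bullet> v = 0)"
proof -
  obtain y z where y: "y \<in> span V" and z: "\<And>w. w \<in> span V \<Longrightarrow> orthogonal z w" and xyz: "x = y + z"
    using orthogonal_subspace_decomp_exists[of V x] by blast
  have ex: "y \<in> V \<and> (\<forall>v\<in>V. (x - y) \<bullet> v = 0)"
  proof -
    have sV: "span V = V" using assms by (simp add: span_eq_iff)
    have "(x - y) \<bullet> v = 0" if "v \<in> V" for v
      using z[of v] that sV xyz by (simp add: orthogonal_def)
    then show ?thesis using y sV by simp
  qed
  have un: "p = y" if "p \<in> V \<and> (\<forall>v\<in>V. (x - p) \<bullet> v = 0)" for p
  proof -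
    have d: "y - p \<in> V" using that ex assms by (simp add: subspace_diff)
    have "(x - p) \<bullet> (y - p) = 0" "(x - y) \<bullet> (y - p) = 0" using that ex d by auto
    then have "(y - p) \<bullet> (y - p) = 0" by (simp add: inner_diff_left inner_diff_right algebra_simps)
    then show ?thesis by simp
  qed
  have "orth_proj V x = y" unfolding orth_proj_def by (rule the_equality) (use ex un in blast)+
  then show ?thesis using ex by simp
qed

lemma orth_proj_in: "subspace (V::(real^'n) set) \<Longrightarrow> orth_proj V x \<in> V"
  using orth_proj_char by blast

lemma orth_proj_orth: "subspace (V::(real^'n) set) \<Longrightarrow> v \<in> V \<Longrightarrow> (x - orth_proj V x) \<bullet> v = 0"
  using orth_proj_char by blast

lemma orth_proj_unique:
  assumes "subspace (V::(real^'n) set)" "p \<in> V" "\<And>v. v \<in> V \<Longrightarrow> (x - p) \<bullet> v = 0"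
  shows "orth_proj V x = p"
proof -
  let ?q = "orth_proj V x"
  have d: "p - ?q \<in> V" using assms orth_proj_in subspace_diff by blast
  have "(x - p) \<bullet> (p - ?q) = 0" "(x - ?q) \<bullet> (p - ?q) = 0" using assms d orth_proj_orth by auto
  then have "(p - ?q) \<bullet> (p - ?q) = 0" by (simp add: inner_diff_left inner_diff_right algebra_simps)
  then show ?thesis by simp
qed

lemma orth_proj_id: "subspace (V::(real^'n) set) \<Longrightarrow> x \<in> V \<Longrightarrow> orth_proj V x = x"
  by (rule orth_proj_unique) auto

lemma orth_proj_linear:
  assumes V: "subspace (V::(real^'n) set)" shows "linear (orth_proj V)"
proof (rule linearI)
  fix x y :: "real^'n" and c :: real
  show "orth_proj V (x + y) = orth_proj V x + orth_proj V y"
  proof (rule orth_proj_unique[OF V])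
    show "orth_proj V x + orth_proj V y \<in> V" using V orth_proj_in subspace_add by blast
    fix v assume "v \<in> V"
    then have "(x - orth_proj V x) \<bullet> v = 0" "(y - orth_proj V y) \<bullet> v = 0" using orth_proj_orth V by blast+
    then show "(x + y - (orth_proj V x + orth_proj V y)) \<bullet> v = 0"
      by (simp add: inner_diff_left inner_add_left)
  qed
  show "orth_proj V (c *\<^sub>R x) = c *\<^sub>R orth_proj V x"
  proof (rule orth_proj_unique[OF V])
    show "c *\<^sub>R orth_proj V x \<in> V" using V orth_proj_in subspace_mul by blast
    fix v assume "v \<in> V"
    then have "(x - orth_proj V x) \<bullet> v = 0" using orth_proj_orth V by blast
    then show "(c *\<^sub>R x - c *\<^sub>R orth_proj V x) \<bullet> v = 0"
      by (metis inner_scaleR_left mult_zero_right scaleR_right_diff_distrib)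
  qed
qed

lemma orth_proj_zero: "subspace (V::(real^'n) set) \<Longrightarrow> (\<forall>v\<in>V. x \<bullet> v = 0) \<Longrightarrow> orth_proj V x = 0"
  by (rule orth_proj_unique) (auto simp: subspace_0)

lemma orth_proj_inner: "subspace (V::(real^'n) set) \<Longrightarrow> v \<in> V \<Longrightarrow> v \<bullet> orth_proj V x = v \<bullet> x"
proof -
  assume a: "subspace V" "v \<in> V"
  have "v \<bullet> (x - orth_proj V x) = 0" using orth_proj_orth[OF a, of x] by (simp add: inner_commute)
  then show ?thesis by (simp add: inner_diff_right)
qed

lemma orth_proj_pyth: "subspace (V::(real^'n) set) \<Longrightarrow> norm x ^ 2 = norm (orth_proj V x) ^ 2 + norm (x - orth_proj V x) ^ 2"
proof -
  assume V: "subspace V"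
  have "(x - orth_proj V x) \<bullet> orth_proj V x = 0" using orth_proj_orth[OF V orth_proj_in[OF V]] .
  then show ?thesis
    by (simp add: power2_norm_eq_inner inner_diff_left inner_diff_right inner_commute algebra_simps)
qed



lemma subspace_preimage_lin:
  assumes "subspace S" "linear g" shows "subspace {y. g y \<in> S}"
  using assms unfolding subspace_def by (auto simp: linear_add linear_scale linear_0)

lemma factor_linear:
  fixes C L :: "real^'n \<Rightarrow> real^'n" and S :: "(real^'n) set"
  assumes S: "subspace S" and C: "linear C" and L: "linear L" and z: "\<forall>x\<in>S. C x = 0 \<longrightarrow> L x = 0"
  shows "\<exists>G. linear G \<and> (\<forall>x\<in>S. L x = G (C x))"
proof -
  obtain B where B: "B \<subseteq> C ` S" "independent B" "C ` S \<subseteq> span B"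
    by (rule basis_exists[of "C ` S"]) blast
  have "\<forall>b\<in>B. \<exists>x. x \<in> S \<and> C x = b" using B(1) by blast
  then have "\<exists>h. \<forall>b\<in>B. h b \<in> S \<and> C (h b) = b" by (rule bchoice)
  then obtain h where h0: "\<forall>b\<in>B. h b \<in> S \<and> C (h b) = b" ..
  then have h: "\<And>b. b \<in> B \<Longrightarrow> h b \<in> S \<and> C (h b) = b" by blast
  obtain g where g: "linear g" "\<And>b. b \<in> B \<Longrightarrow> g b = h b"
    using linear_independent_extend[OF B(2)] by blast
  have Cg: "C (g y) = y" if "y \<in> span B" for y
  proof -
    have "(C \<circ> g) y = id y"
      by (rule linear_eq_on[OF linear_compose[OF g(1) C] linear_id that]) (simp add: g h)
    then show ?thesis by simp
  qed
  have gS: "span B \<subseteq> {y. g y \<in> S}"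
  proof (rule span_minimal)
    show "B \<subseteq> {y. g y \<in> S}" using g h by auto
    show "subspace {y. g y \<in> S}" using S g(1) by (rule subspace_preimage_lin)
  qed
  show ?thesis
  proof (intro exI conjI ballI)
    show "linear (L \<circ> g)" using linear_compose[OF g(1) L] .
    fix x assume x: "x \<in> S"
    have y: "C x \<in> span B" using B(3) x by blast
    have "C (x - g (C x)) = 0" using Cg[OF y] C by (simp add: linear_diff)
    moreover have "x - g (C x) \<in> S" using gS y x S subspace_diff by blast
    ultimately have "L (x - g (C x)) = 0" using z by blast
    then show "L x = (L \<circ> g) (C x)" using L by (simp add: linear_diff)
  qed
qed



lemma bilin_form:
  fixes B' :: "real^'n \<Rightarrow> real^'n \<Rightarrow> real" and z p :: "real^'n \<Rightarrow> real^'n"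
  assumes "bilinear B'" "linear z" "linear p"
  shows "bilinear (\<lambda>x y. \<rho> * B' (z x) (z y) + p x \<bullet> p y)"
  unfolding bilinear_def
proof (intro conjI allI linearI)
  fix x y w :: "real^'n" and c :: real
  show "\<rho> * B' (z x) (z (y + w)) + p x \<bullet> p (y + w) = \<rho> * B' (z x) (z y) + p x \<bullet> p y + (\<rho> * B' (z x) (z w) + p x \<bullet> p w)"
    using assms by (simp add: linear_add bilinear_radd inner_add_right algebra_simps)
  show "\<rho> * B' (z x) (z (c *\<^sub>R y)) + p x \<bullet> p (c *\<^sub>R y) = c *\<^sub>R (\<rho> * B' (z x) (z y) + p x \<bullet> p y)"
    using assms by (simp add: linear_scale bilinear_rmul algebra_simps)
  show "\<rho> * B' (z (y + w)) (z x) + p (y + w) \<bullet> p x = \<rho> * B' (z y) (z x) + p y \<bullet> p x + (\<rho> * B' (z w) (z x) + p w \<bullet> p x)"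
    using assms by (simp add: linear_add bilinear_ladd inner_add_left algebra_simps)
  show "\<rho> * B' (z (c *\<^sub>R y)) (z x) + p (c *\<^sub>R y) \<bullet> p x = c *\<^sub>R (\<rho> * B' (z y) (z x) + p y \<bullet> p x)"
    using assms by (simp add: linear_scale bilinear_lmul algebra_simps)
qed

lemma amgm: "(a::real) * b \<le> a^2/2 + b^2/2"
  using sum_squares_ge_zero[of "a - b" 0] by (simp add: power2_eq_square algebra_simps)

lemma stab:
  fixes X :: "(real^'n) set" and A C :: "real^'n \<Rightarrow> real^'n" and \<mu> :: real
  assumes "subspace X" "linear A" "\<forall>x\<in>X. A x \<in> X" "linear C"
    "\<forall>U. subspace U \<and> U \<subseteq> X \<and> (\<forall>u\<in>U. C u = 0) \<and> (\<forall>u\<in>U. A u \<in> U) \<longrightarrow> U \<subseteq> {0}"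
  shows "\<exists>G B \<alpha>. linear G \<and> (\<forall>y. G y \<in> X) \<and> bilinear B \<and> (\<forall>x y. B x y = B y x) \<and> \<alpha> > 0 \<and>
     (\<forall>x\<in>X. \<alpha> * (norm x)^2 \<le> B x x) \<and> (\<forall>x\<in>X. B x (A x + G (C x)) \<le> - \<mu> * B x x)"
  using assms
proof (induction "dim X" arbitrary: X A C \<mu> rule: less_induct)
  case less
  note X = less.prems(1) and linA = less.prems(2) and AX = less.prems(3) and linC = less.prems(4)
    and obs = less.prems(5)
  show ?case
  proof (cases "X \<subseteq> {0}")
    case True
    show ?thesis
    proof (intro exI conjI)
      show "linear (\<lambda>y::real^'n. 0::real^'n)" by (simp add: linear_iff)
      show "\<forall>y. (0::real^'n) \<in> X" using X subspace_0 by blast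
      show "bilinear (inner :: real^'n \<Rightarrow> _)" using bounded_bilinear_inner by (simp add: bilinear_conv_bounded_bilinear)
      show "\<forall>x y::real^'n. x \<bullet> y = y \<bullet> x" by (simp add: inner_commute)
      show "\<forall>x\<in>X. 1 * (norm x)^2 \<le> x \<bullet> x" by (simp add: power2_norm_eq_inner)
      show "\<forall>x\<in>X. x \<bullet> (A x + 0) \<le> - \<mu> * (x \<bullet> x)" using True by auto
    qed simp
  next
    case False
    define N where "N = {x\<in>X. C x = 0}"
    have N: "subspace N" unfolding N_def using X linC unfolding subspace_def
      by (auto simp: linear_add linear_scale linear_0)
    have NX: "N \<subseteq> X" unfolding N_def by auto
    have "N \<noteq> X"
    proof
      assume "N = X"
      then have "subspace X \<and> X \<subseteq> X \<and> (\<forall>u\<in>X. C u = 0) \<and> (\<forall>u\<in>X. A u \<in> X)" using X AX unfolding N_def by blast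
      then have "X \<subseteq> {0}" using spec[OF obs, of X] by (rule mp[rotated])
      then show False using False by blast
    qed
    moreover have sN: "span N = N" using N by (simp add: span_eq_iff)
    moreover have sX: "span X = X" using X by (simp add: span_eq_iff)
    ultimately have "span N \<subset> span X" using NX by (metis psubsetI)
    then have dimN: "dim N < dim X" by (rule dim_psubset)
    define PN where "PN = orth_proj N"
    define PX where "PX = orth_proj X"
    define PR where "PR = (\<lambda>x. PX x - PN x)"
    have linPN: "linear PN" unfolding PN_def using N by (rule orth_proj_linear)
    have linPX: "linear PX" unfolding PX_def using X by (rule orth_proj_linear)
    have linPR: "linear PR" unfolding PR_def using linPX linPN by (rule linear_compose_sub)
    have PNin: "PN y \<in> N" for y unfolding PN_def using N by (rule orth_proj_in)
    have PXin: "PX y \<in> X" for y unfolding PX_def using X by (rule orth_proj_in)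
    have PXid: "PX y = y" if "y \<in> X" for y unfolding PX_def using X that by (rule orth_proj_id)
    have PNid: "PN y = y" if "y \<in> N" for y unfolding PN_def using N that by (rule orth_proj_id)
    have PRin: "PR y \<in> X" for y unfolding PR_def using PXin PNin NX X subspace_diff by blast
    have PRorth: "PR y \<bullet> v = 0" if "v \<in> N" for y v
    proof -
      have "v \<bullet> PX y = v \<bullet> y" unfolding PX_def using X NX that by (intro orth_proj_inner) auto
      moreover have "v \<bullet> PN y = v \<bullet> y" unfolding PN_def using N that by (intro orth_proj_inner) auto
      ultimately have "v \<bullet> PR y = 0" unfolding PR_def by (simp add: inner_diff_right)
      then show ?thesis by (simp add: inner_commute)
    qed
    have PN_R: "PN y = 0" if "y \<in> X" "\<And>v. v \<in> N \<Longrightarrow> y \<bullet> v = 0" for y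
      unfolding PN_def using N that by (intro orth_proj_zero) auto
    have PN_PR: "PN (PR y) = 0" for y using PN_R[OF PRin PRorth] .
    have PR_app: "PR y = PX y - PN y" for y unfolding PR_def by simp
    have PR_PR: "PR (PR y) = PR y" for y using PR_app[of "PR y"] PN_PR PXid[OF PRin] by simp
    have PR_N: "PR y = 0" if "y \<in> N" for y unfolding PR_def using PXid PNid NX that by auto
    have decomp: "y = PR y + PN y" if "y \<in> X" for y unfolding PR_def using PXid[OF that] by simp
    define A' where "A' = (\<lambda>x. PN (A x))"
    define C' where "C' = (\<lambda>x. PR (A x))"
    have linA': "linear A'" unfolding A'_def using linA linPN linear_compose[of A PN] by (simp add: o_def)
    have linC': "linear C'" unfolding C'_def using linA linPR linear_compose[of A PR] by (simp add: o_def)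
    have obs': "\<forall>U. subspace U \<and> U \<subseteq> N \<and> (\<forall>u\<in>U. C' u = 0) \<and> (\<forall>u\<in>U. A' u \<in> U) \<longrightarrow> U \<subseteq> {0}"
    proof (intro allI impI)
      fix U assume U: "subspace U \<and> U \<subseteq> N \<and> (\<forall>u\<in>U. C' u = 0) \<and> (\<forall>u\<in>U. A' u \<in> U)"
      have "A u \<in> U" if "u \<in> U" for u
      proof -
        have "A u \<in> X" using AX U NX that by blast
        then have "A u = PR (A u) + PN (A u)" by (rule decomp)
        then show ?thesis using U that unfolding C'_def A'_def by auto
      qed
      moreover have "\<forall>u\<in>U. C u = 0" using U unfolding N_def by auto
      ultimately have "subspace U \<and> U \<subseteq> X \<and> (\<forall>u\<in>U. C u = 0) \<and> (\<forall>u\<in>U. A u \<in> U)" using U NX by blast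
      then show "U \<subseteq> {0}" using spec[OF obs, of U] by (rule mp[rotated])
    qed
    have A'N: "\<forall>x\<in>N. A' x \<in> N" unfolding A'_def using PNin by blast
    obtain G' B' \<alpha>' where G': "linear G'" "\<forall>y. G' y \<in> N" and B': "bilinear B'" "\<forall>x y. B' x y = B' y x"
      and \<alpha>': "\<alpha>' > 0" "\<forall>x\<in>N. \<alpha>' * (norm x)^2 \<le> B' x x"
      and dec': "\<forall>x\<in>N. B' x (A' x + G' (C' x)) \<le> - (\<mu> + 1) * B' x x"
      using less.hyps[OF dimN N linA' A'N linC' obs', of "\<mu> + 1"] by blast
    obtain g where g: "g > 0" "\<And>y. norm (G' y) \<le> g * norm y" using linear_bounded_pos[OF G'(1)] by blast
    obtain c where c: "c > 0" "\<And>y. norm (C' y) \<le> c * norm y" using linear_bounded_pos[OF linC'] by blast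
    define \<gamma> where "\<gamma> = \<mu> + 1"
    define F where "F = (\<lambda>a. (- PR (A a) + C' (G' a) - \<gamma> *\<^sub>R a) + (A' (G' a) + \<gamma> *\<^sub>R G' a - PN (A a)))"
    define L where "L = (\<lambda>x. F (PR x))"
    have linF: "linear F" unfolding F_def A'_def C'_def
      using linPR linPN linA G'(1)
      by (intro linearI) (simp_all add: linear_add linear_scale linear_diff linear_neg algebra_simps scaleR_add_right)
    have linL: "linear L" unfolding L_def using linear_compose[OF linPR linF] by (simp add: o_def)
    have Lz: "\<forall>x\<in>X. C x = 0 \<longrightarrow> L x = 0"
    proof (intro ballI impI)
      fix x assume "x \<in> X" "C x = 0"
      then have "x \<in> N" unfolding N_def by auto
      then show "L x = 0" unfolding L_def using PR_N linF linear_0 by auto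
    qed
    obtain G0 where G0: "linear G0" "\<forall>x\<in>X. L x = G0 (C x)" using factor_linear[OF X linC linL Lz] by blast
    define G where "G = (\<lambda>y. PX (G0 y))"
    have linG: "linear G" unfolding G_def using linear_compose[OF G0(1) linPX] by (simp add: o_def)
    have F1R: "PR (- PR (A a) + C' (G' a) - \<gamma> *\<^sub>R PR a) = - PR (A a) + C' (G' a) - \<gamma> *\<^sub>R PR a"
      and F1N: "PN (- PR (A a) + C' (G' a) - \<gamma> *\<^sub>R PR a) = 0" for a
      unfolding C'_def using linPR linPN PR_PR PN_PR
      by (simp_all add: linear_add linear_diff linear_neg linear_scale)
    have F2N: "PN (A' (G' a) + \<gamma> *\<^sub>R G' a - PN (A a)) = A' (G' a) + \<gamma> *\<^sub>R G' a - PN (A a)"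
      and F2R: "PR (A' (G' a) + \<gamma> *\<^sub>R G' a - PN (A a)) = 0" for a
    proof -
      have "A' (G' a) + \<gamma> *\<^sub>R G' a - PN (A a) \<in> N" unfolding A'_def
        using PNin G'(2) N by (intro subspace_diff subspace_add subspace_mul) auto
      then show "PN (A' (G' a) + \<gamma> *\<^sub>R G' a - PN (A a)) = A' (G' a) + \<gamma> *\<^sub>R G' a - PN (A a)"
        "PR (A' (G' a) + \<gamma> *\<^sub>R G' a - PN (A a)) = 0" using PNid PR_N by auto
    qed
    have LX: "L x \<in> X" for x
    proof -
      have 1: "- PR (A (PR x)) + C' (G' (PR x)) - \<gamma> *\<^sub>R PR x \<in> X"
        unfolding C'_def using PRin X by (intro subspace_diff subspace_add subspace_neg subspace_mul) auto
      have 2: "A' (G' (PR x)) + \<gamma> *\<^sub>R G' (PR x) - PN (A (PR x)) \<in> X"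
        unfolding A'_def using PNin G'(2) NX X by (intro subspace_diff subspace_add subspace_mul) auto
      show ?thesis unfolding L_def F_def using subspace_add[OF X 1 2] .
    qed
    have GC: "G (C x) = L x" if "x \<in> X" for x unfolding G_def using G0(2) that PXid LX by metis
    define z where "z = (\<lambda>x. PN x + G' (PR x))"
    have z_app: "z y = PN y + G' (PR y)" for y unfolding z_def by simp
    have linz: "linear z" unfolding z_def using linPN linPR G'(1)
      by (intro linearI) (simp_all add: linear_add linear_scale scaleR_add_right)
    have zN: "z x \<in> N" for x unfolding z_def using PNin G'(2) N subspace_add by blast
    define \<rho> where "\<rho> = c^2 / (2 * \<alpha>') + 1"
    have \<rho>: "\<rho> > 0" "c^2 / (2 * \<alpha>') \<le> \<rho>" unfolding \<rho>_def using \<alpha>' by (auto intro: add_nonneg_pos)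
    define B where "B = (\<lambda>x y. \<rho> * B' (z x) (z y) + PR x \<bullet> PR y)"
    have bilB: "bilinear B" unfolding B_def using B'(1) linz linPR by (rule bilin_form)
    have symB: "\<forall>x y. B x y = B y x" unfolding B_def using B'(2) by (simp add: inner_commute)
    have dynR: "PR (A x + G (C x)) = C' (z x) - \<gamma> *\<^sub>R PR x"
     and dynz: "z (A x + G (C x)) = A' (z x) + G' (C' (z x))" if x: "x \<in> X" for x
    proof -
      define a where "a = PR x"
      define b where "b = PN x"
      have xab: "x = a + b" unfolding a_def b_def using decomp[OF x] .
      have bN: "b \<in> N" unfolding b_def by (rule PNin)
      have Ab: "A b \<in> X" using AX bN NX by blast
      have Ax: "A x = A a + A b" by (subst xab) (simp add: linear_add[OF linA])
      have v: "A x + G (C x) = A a + A b + F a" using GC[OF x] Ax unfolding L_def a_def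
        by simp
      have FR: "PR (F a) = - PR (A a) + C' (G' a) - \<gamma> *\<^sub>R a"
        unfolding F_def a_def using F2R[of "PR x"] linPR PR_PR
        by (simp add: linear_add linear_diff linear_neg linear_scale C'_def)
      have FN: "PN (F a) = A' (G' a) + \<gamma> *\<^sub>R G' a - PN (A a)"
        unfolding F_def a_def using F2N[of "PR x"] linPN PN_PR
        by (simp add: linear_add linear_diff linear_neg linear_scale C'_def)
      have R1: "PR (A x + G (C x)) = PR (A a) + C' b + PR (F a)"
        unfolding v C'_def using linPR by (simp add: linear_add)
      have N1: "PN (A x + G (C x)) = PN (A a) + A' b + PN (F a)"
        unfolding v A'_def using linPN by (simp add: linear_add)
      have zx: "z x = b + G' a" unfolding z_def a_def b_def ..
      show R: "PR (A x + G (C x)) = C' (z x) - \<gamma> *\<^sub>R PR x"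
        unfolding R1 FR zx using linC' by (simp add: linear_add a_def)
      show "z (A x + G (C x)) = A' (z x) + G' (C' (z x))"
        unfolding z_app[of "A x + G (C x)"] R[folded a_def] N1 FN zx using linA' G'(1)
        by (simp add: linear_add linear_diff linear_scale algebra_simps)
    qed
    define \<alpha> where "\<alpha> = min 1 (\<rho> * \<alpha>') / (4 + 4 * g^2)"
    show ?thesis
    proof (intro exI conjI ballI)
      show "linear G" by (rule linG)
      show "\<forall>y. G y \<in> X" unfolding G_def using PXin by blast
      show "bilinear B" by (rule bilB)
      show "\<forall>x y. B x y = B y x" by (rule symB)
      show "\<alpha> > 0" unfolding \<alpha>_def using \<rho> \<alpha>' by (auto intro!: divide_pos_pos add_pos_nonneg)
    next
      fix x assume x: "x \<in> X"
      define a where "a = PR x"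
      define b where "b = PN x"
      have xab: "x = a + b" unfolding a_def b_def using decomp[OF x] .
      have zx: "z x = b + G' a" unfolding z_def a_def b_def ..
      have Bxx: "B x x = \<rho> * B' (z x) (z x) + norm a ^ 2" unfolding B_def a_def by (simp add: power2_norm_eq_inner)
      have B'z: "\<alpha>' * norm (z x) ^ 2 \<le> B' (z x) (z x)" using \<alpha>' zN by blast
      have nx: "norm x ^ 2 \<le> (4 + 4 * g^2) * (norm a ^ 2 + norm (z x) ^ 2)"
      proof -
        have nb: "norm b \<le> norm (z x) + g * norm a"
          using norm_triangle_ineq4[of "z x" "G' a"] g(2)[of a] by (simp add: zx)
        have "norm x \<le> norm a + norm b" unfolding xab by (rule norm_triangle_ineq)
        also have "\<dots> \<le> (1 + g) * norm a + norm (z x)" using nb by (simp add: algebra_simps)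
        finally have "norm x \<le> (1 + g) * norm a + norm (z x)" .
        then have "norm x ^ 2 \<le> ((1 + g) * norm a + norm (z x)) ^ 2"
          by (simp add: power_mono)
        also have "\<dots> \<le> 2 * ((1 + g) * norm a) ^ 2 + 2 * norm (z x) ^ 2"
          using amgm[of "(1 + g) * norm a" "norm (z x)"] by (simp add: power2_sum)
        also have "\<dots> \<le> (4 + 4 * g^2) * (norm a ^ 2 + norm (z x) ^ 2)"
        proof -
          have "(1 + g)^2 \<le> 2 + 2 * g^2" using amgm[of 1 g] by (simp add: power2_sum)
          then have "2 * (1 + g)^2 * norm a ^ 2 \<le> 2 * (2 + 2 * g^2) * norm a ^ 2"
            by (intro mult_right_mono mult_left_mono) auto
          moreover have "2 * ((1 + g) * norm a) ^ 2 = 2 * (1 + g)^2 * norm a ^ 2"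
            by (simp add: power_mult_distrib)
          ultimately have "2 * ((1 + g) * norm a) ^ 2 \<le> (4 + 4 * g^2) * norm a ^ 2"
            by (simp add: algebra_simps)
          moreover have "2 * norm (z x) ^ 2 \<le> (4 + 4 * g^2) * norm (z x) ^ 2"
            by (simp add: mult_right_mono)
          ultimately have "2 * ((1 + g) * norm a) ^ 2 + 2 * norm (z x) ^ 2 \<le> (4 + 4 * g^2) * norm a ^ 2 + (4 + 4 * g^2) * norm (z x) ^ 2"
            by (rule add_mono)
          then show ?thesis by (simp only: distrib_left)
        qed
        finally show ?thesis .
      qed
      have "min 1 (\<rho> * \<alpha>') * (norm a ^ 2 + norm (z x) ^ 2) \<le> B x x"
      proof -
        have "min 1 (\<rho> * \<alpha>') * norm (z x) ^ 2 \<le> \<rho> * \<alpha>' * norm (z x) ^ 2"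
          using mult_right_mono[of "min 1 (\<rho> * \<alpha>')" "\<rho> * \<alpha>'" "norm (z x) ^ 2"] by simp
        also have "\<dots> \<le> \<rho> * B' (z x) (z x)" using B'z \<rho> by (simp add: mult.assoc)
        finally have 1: "min 1 (\<rho> * \<alpha>') * norm (z x) ^ 2 \<le> \<rho> * B' (z x) (z x)" .
        have 2: "min 1 (\<rho> * \<alpha>') * norm a ^ 2 \<le> norm a ^ 2"
          using mult_right_mono[of "min 1 (\<rho> * \<alpha>')" 1 "norm a ^ 2"] by simp
        show ?thesis using 1 2 unfolding Bxx by (simp add: algebra_simps)
      qed
      moreover have "\<alpha> * norm x ^ 2 \<le> min 1 (\<rho> * \<alpha>') * (norm a ^ 2 + norm (z x) ^ 2)"
      proof -
        have pos: "0 \<le> min 1 (\<rho> * \<alpha>')" using \<rho> \<alpha>' by simp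
        have "\<alpha> * norm x ^ 2 \<le> \<alpha> * ((4 + 4 * g^2) * (norm a ^ 2 + norm (z x) ^ 2))"
          using nx pos unfolding \<alpha>_def by (intro mult_left_mono) (auto intro!: divide_nonneg_pos add_pos_nonneg)
        also have "\<dots> = min 1 (\<rho> * \<alpha>') * (norm a ^ 2 + norm (z x) ^ 2)"
        proof -
          have D: "4 + 4 * g^2 > (0::real)" by (simp add: add_pos_nonneg)
          have "\<alpha> * (4 + 4 * g^2) = min 1 (\<rho> * \<alpha>')" unfolding \<alpha>_def using D by simp
          then show ?thesis by (metis mult.assoc)
        qed
        finally show ?thesis .
      qed
      ultimately show "\<alpha> * (norm x)^2 \<le> B x x" by linarith
    next
      fix x assume x: "x \<in> X"
      define a where "a = PR x"
      define v where "v = A x + G (C x)"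
      have Bxv: "B x v = \<rho> * B' (z x) (A' (z x) + G' (C' (z x))) + a \<bullet> (C' (z x) - \<gamma> *\<^sub>R a)"
        unfolding B_def v_def using dynR[OF x] dynz[OF x] by (simp add: a_def)
      have Bxx: "B x x = \<rho> * B' (z x) (z x) + norm a ^ 2" unfolding B_def a_def by (simp add: power2_norm_eq_inner)
      have d1: "B' (z x) (A' (z x) + G' (C' (z x))) \<le> - (\<mu> + 1) * B' (z x) (z x)" using dec' zN by blast
      have B'z: "\<alpha>' * norm (z x) ^ 2 \<le> B' (z x) (z x)" using \<alpha>' zN by blast
      have cross: "a \<bullet> C' (z x) \<le> norm a ^ 2 / 2 + (c^2 / (2 * \<alpha>')) * B' (z x) (z x)"
      proof -
        have "a \<bullet> C' (z x) \<le> norm a * (c * norm (z x))"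
          using Cauchy_Schwarz_ineq2[of a "C' (z x)"] c(2)[of "z x"]
          by (meson abs_le_D1 mult_left_mono norm_ge_zero order_trans)
        also have "\<dots> \<le> norm a ^ 2 / 2 + (c * norm (z x)) ^ 2 / 2" by (rule amgm)
        also have "(c * norm (z x)) ^ 2 / 2 \<le> (c^2 / (2 * \<alpha>')) * B' (z x) (z x)"
        proof -
          have "(c * norm (z x)) ^ 2 / 2 = (c^2 / (2 * \<alpha>')) * (\<alpha>' * norm (z x) ^ 2)"
            using \<alpha>' by (simp add: power_mult_distrib field_simps)
          also have "\<dots> \<le> (c^2 / (2 * \<alpha>')) * B' (z x) (z x)"
            using B'z \<alpha>' by (intro mult_left_mono) auto
          finally show ?thesis .
        qed
        finally show ?thesis by simp
      qed
      have Bpos: "0 \<le> B' (z x) (z x)" using B'z \<alpha>' by (meson order_trans mult_nonneg_nonneg less_imp_le zero_le_power2)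
      have aa: "a \<bullet> (C' (z x) - \<gamma> *\<^sub>R a) = a \<bullet> C' (z x) - \<gamma> * norm a ^ 2"
        by (simp add: inner_diff_right power2_norm_eq_inner)
      have "B x v \<le> \<rho> * (- (\<mu> + 1) * B' (z x) (z x)) + (norm a ^ 2 / 2 + (c^2 / (2 * \<alpha>')) * B' (z x) (z x)) - \<gamma> * norm a ^ 2"
      proof -
        have "\<rho> * B' (z x) (A' (z x) + G' (C' (z x))) \<le> \<rho> * (- (\<mu> + 1) * B' (z x) (z x))"
          using mult_left_mono[OF d1, of \<rho>] \<rho>(1) by simp
        then show ?thesis unfolding Bxv aa using cross by linarith
      qed
      also have "\<dots> \<le> - \<mu> * B x x"
      proof -
        have "(c^2 / (2 * \<alpha>')) * B' (z x) (z x) \<le> \<rho> * B' (z x) (z x)" using \<rho>(2) Bpos by (rule mult_right_mono)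
        moreover have "0 \<le> norm a ^ 2" by simp
        ultimately show ?thesis unfolding Bxx \<gamma>_def by (simp add: algebra_simps) (rule add_increasing2; simp)
      qed
      finally show "B x (A x + G (C x)) \<le> - \<mu> * B x x" unfolding v_def .
    qed
  qed
qed



lemma li_subspace: "subspace (largest_inv_subspace A W)"
  unfolding largest_inv_subspace_def by (rule subspace_span)

lemma li_sub: "subspace W \<Longrightarrow> largest_inv_subspace A W \<subseteq> W"
  unfolding largest_inv_subspace_def by (rule span_minimal) auto

lemma li_max: "subspace V \<Longrightarrow> A_invariant A V \<Longrightarrow> V \<subseteq> W \<Longrightarrow> V \<subseteq> largest_inv_subspace A W"
  unfolding largest_inv_subspace_def by (rule order_trans[OF _ span_superset]) blast

lemma li_inv:
  fixes A :: "real^'n^'n"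
  assumes "x \<in> largest_inv_subspace A W" shows "A *v x \<in> largest_inv_subspace A W"
proof -
  let ?S = "\<Union>{V. subspace V \<and> A_invariant A V \<and> V \<subseteq> W}"
  have "span ?S \<subseteq> {x. A *v x \<in> span ?S}"
  proof (rule span_minimal)
    show "?S \<subseteq> {x. A *v x \<in> span ?S}"
      unfolding A_invariant_def by (auto intro: span_base)
    show "subspace {x. A *v x \<in> span ?S}"
      by (rule subspace_preimage_lin) (auto simp: subspace_span)
  qed
  then show ?thesis using assms unfolding largest_inv_subspace_def by blast
qed

lemma out_ker: "(out_map C s i x = (\<lambda>_. 0)) \<longleftrightarrow> (\<forall>k<s i. C i k \<bullet> x = 0)"
  unfolding out_map_def fun_eq_iff by auto

definition Ct :: "(nat \<Rightarrow> nat \<Rightarrow> real^'n) \<Rightarrow> (nat \<Rightarrow> nat) \<Rightarrow> nat \<Rightarrow> real^'n \<Rightarrow> real^'n" where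
  "Ct C s i x = (\<Sum>k<s i. (C i k \<bullet> x) *\<^sub>R C i k)"

lemma Ct_linear: "linear (Ct C s i)"
  unfolding Ct_def
  by (intro linearI) (simp_all add: inner_add_right scaleR_add_left sum.distrib scaleR_sum_right)

lemma Ct_zero_iff: "Ct C s i x = 0 \<longleftrightarrow> (\<forall>k<s i. C i k \<bullet> x = 0)"
proof
  assume h: "Ct C s i x = 0"
  have "x \<bullet> Ct C s i x = (\<Sum>k<s i. (C i k \<bullet> x)^2)"
    unfolding Ct_def by (simp add: inner_sum_right power2_eq_square inner_commute)
  then have "(\<Sum>k<s i. (C i k \<bullet> x)^2) = 0" using h by simp
  then show "\<forall>k<s i. C i k \<bullet> x = 0" by (simp add: sum_nonneg_eq_0_iff)
next
  assume "\<forall>k<s i. C i k \<bullet> x = 0" then show "Ct C s i x = 0" unfolding Ct_def by simp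
qed

lemma gain_Ct:
  assumes "linear (Gf i)"
  shows "gain_map (\<lambda>i k. Gf i (C i k)) s i (out_map C s i x) = Gf i (Ct C s i x)"
  unfolding gain_map_def out_map_def Ct_def
  using assms by (simp add: linear_sum linear_scale)

lemma gamma_lemma:
  fixes Vs :: "nat \<Rightarrow> (real^'n) set"
  assumes sub: "\<forall>i<m. subspace (Vs i)" and int: "\<forall>z. (\<forall>i<m. z \<in> Vs i) \<longrightarrow> z = 0"
  shows "\<exists>\<gamma>>0. \<forall>z. \<gamma> * (norm z)^2 \<le> (\<Sum>i<m. (norm (z - orth_proj (Vs i) z))^2)"
proof -
  define f where "f = (\<lambda>z. \<Sum>i<m. (norm (z - orth_proj (Vs i) z))^2)"
  have lin: "linear (orth_proj (Vs i))" if "i < m" for i using sub that orth_proj_linear by blast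
  have cont: "continuous_on (sphere 0 1) f" unfolding f_def
    by (intro continuous_intros linear_continuous_on) (auto simp: lin linear_linear)
  obtain e :: "real^'n" where e: "norm e = 1" using vector_choose_size[of 1] by auto
  then have ne: "sphere (0::real^'n) 1 \<noteq> {}" by auto
  obtain z0 where z0: "z0 \<in> sphere 0 1" "\<forall>y\<in>sphere 0 1. f z0 \<le> f y"
    using continuous_attains_inf[OF compact_sphere ne cont] by blast
  have "f z0 > 0"
  proof (rule ccontr)
    assume "\<not> f z0 > 0"
    then have "f z0 = 0" unfolding f_def by (metis (no_types, lifting) le_less sum_nonneg zero_le_power2)
    then have "\<forall>i<m. (norm (z0 - orth_proj (Vs i) z0))^2 = 0" unfolding f_def
      by (simp add: sum_nonneg_eq_0_iff)
    then have "\<forall>i<m. z0 \<in> Vs i" using sub orth_proj_in by (metis eq_iff_diff_eq_0 norm_eq_zero power_eq_0_iff)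
    then have "z0 = 0" using int by blast
    then show False using z0 by simp
  qed
  show ?thesis
  proof (intro exI conjI allI)
    show "f z0 > 0" by fact
    fix z :: "real^'n"
    show "f z0 * (norm z)^2 \<le> (\<Sum>i<m. (norm (z - orth_proj (Vs i) z))^2)"
    proof (cases "z = 0")
      case True then show ?thesis by (simp add: sum_nonneg)
    next
      case False
      define u where "u = z /\<^sub>R norm z"
      have "u \<in> sphere 0 1" unfolding u_def using False by simp
      then have "f z0 \<le> f u" using z0 by blast
      also have "f u = f z / (norm z)^2"
      proof -
        have "norm (u - orth_proj (Vs i) u) ^ 2 = norm (z - orth_proj (Vs i) z) ^ 2 / (norm z)^2" if "i < m" for i
        proof -
          have "u - orth_proj (Vs i) u = (z - orth_proj (Vs i) z) /\<^sub>R norm z"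
            unfolding u_def using lin[OF that] by (simp add: linear_scale scaleR_diff_right)
          then show ?thesis by (simp add: power_mult_distrib power_inverse divide_inverse mult.commute)
        qed
        then show ?thesis unfolding f_def by (simp add: sum_divide_distrib)
      qed
      finally have "f z0 * (norm z)^2 \<le> f z" using False by (simp add: field_simps)
      then show ?thesis unfolding f_def .
    qed
  qed
qed

lemma dini:
  fixes f f' :: "real \<Rightarrow> real"
  assumes cont: "continuous_on {0..} f"
    and der: "\<And>t. t \<ge> 0 \<Longrightarrow> (f has_real_derivative f' t) (at t within {t..})"
    and neg: "\<And>t. t \<ge> 0 \<Longrightarrow> f' t \<le> 0"
    and T: "T \<ge> 0"
  shows "f T \<le> f 0"
proof (rule ccontr)
  assume "\<not> f T \<le> f 0"
  then have gt: "f T > f 0" by simp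
  then have Tp: "T > 0" using T by (cases "T = 0") auto
  define \<epsilon> where "\<epsilon> = (f T - f 0) / (2 * T)"
  have \<epsilon>: "\<epsilon> > 0" unfolding \<epsilon>_def using gt Tp by simp
  define h where "h = (\<lambda>t. f t - f 0 - \<epsilon> * t)"
  have hT: "h T > 0" unfolding h_def \<epsilon>_def using gt Tp by (simp add: field_simps)
  define S where "S = {t\<in>{0..T}. h t \<le> 0}"
  have contT: "continuous_on {0..T} h" unfolding h_def
    by (intro continuous_intros continuous_on_subset[OF cont]) auto
  have cS: "closed S"
  proof -
    have "S = {0..T} \<inter> h -` {..0}" unfolding S_def by auto
    then show ?thesis using continuous_closed_preimage[OF contT closed_atLeastAtMost closed_atMost] by simp
  qed
  have S0: "0 \<in> S" unfolding S_def h_def using T by simp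
  have bS: "bdd_above S" unfolding S_def by (rule bdd_aboveI[of _ T]) auto
  define s where "s = Sup S"
  have sS: "s \<in> S" unfolding s_def using closed_contains_Sup[OF _ bS cS] S0 by blast
  then have s: "0 \<le> s" "s \<le> T" "h s \<le> 0" unfolding S_def by auto
  have sT: "s < T" using s hT by (cases "s = T") auto
  have "((\<lambda>t. f t - f 0 - \<epsilon> * t) has_real_derivative (f' s - 0 - \<epsilon> * 1)) (at s within {s..})"
    by (intro derivative_intros der s) (use DERIV_cmult_Id in simp)
  then have dh: "(h has_real_derivative (f' s - \<epsilon>)) (at s within {s..})" unfolding h_def by simp
  have "f' s - \<epsilon> < 0" using neg[OF s(1)] \<epsilon> by simp
  from has_real_derivative_neg_dec_right[OF dh this]
  obtain d where d: "d > 0" "\<And>\<delta>. \<delta> > 0 \<Longrightarrow> s + \<delta> \<in> {s..} \<Longrightarrow> \<delta> < d \<Longrightarrow> h (s + \<delta>) < h s" by blast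
  define \<delta> where "\<delta> = min (d / 2) (T - s)"
  have \<delta>: "\<delta> > 0" "\<delta> < d" "s + \<delta> \<le> T" unfolding \<delta>_def using d sT by auto
  have "h (s + \<delta>) < h s" using d(2)[OF \<delta>(1) _ \<delta>(2)] \<delta>(1) by simp
  then have "s + \<delta> \<in> S" unfolding S_def using s \<delta> by auto
  then have "s + \<delta> \<le> s" unfolding s_def using bS by (rule cSup_upper)
  then show False using \<delta> by simp
qed



lemma amgm5: "(a::real) * b \<le> a^2/2 + b^2/2"
  using sum_squares_ge_zero[of "a - b" 0] by (simp add: power2_eq_square algebra_simps)

lemma Smat_nonneg: "Smat E m p i j \<ge> 0"
  unfolding Smat_def by simp

lemma ds_identity:
  fixes w :: "nat \<Rightarrow> real^'n"
  assumes ds: "doubly_stochastic m S"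
  shows "(\<Sum>i<m. (norm (w i))^2) - (\<Sum>i<m. \<Sum>j<m. S i j * (w i \<bullet> w j))
         = (\<Sum>i<m. \<Sum>j<m. S i j * (norm (w i - w j))^2) / 2"
proof -
  have row: "(\<Sum>i<m. \<Sum>j<m. S i j * (norm (w i))^2) = (\<Sum>i<m. (norm (w i))^2)"
  proof -
    have "(\<Sum>i<m. \<Sum>j<m. S i j * (norm (w i))^2) = (\<Sum>i<m. (\<Sum>j<m. S i j) * (norm (w i))^2)"
      by (simp add: sum_distrib_right)
    also have "\<dots> = (\<Sum>i<m. (norm (w i))^2)" using ds unfolding doubly_stochastic_def by simp
    finally show ?thesis .
  qed
  have col: "(\<Sum>i<m. \<Sum>j<m. S i j * (norm (w j))^2) = (\<Sum>j<m. (norm (w j))^2)"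
  proof -
    have "(\<Sum>i<m. \<Sum>j<m. S i j * (norm (w j))^2) = (\<Sum>j<m. \<Sum>i<m. S i j * (norm (w j))^2)"
      by (rule sum.swap)
    also have "\<dots> = (\<Sum>j<m. (\<Sum>i<m. S i j) * (norm (w j))^2)"
      by (simp add: sum_distrib_right)
    also have "\<dots> = (\<Sum>j<m. (norm (w j))^2)" using ds unfolding doubly_stochastic_def by simp
    finally show ?thesis .
  qed
  have "(\<Sum>i<m. \<Sum>j<m. S i j * (norm (w i - w j))^2)
      = (\<Sum>i<m. \<Sum>j<m. S i j * (norm (w i))^2) + (\<Sum>i<m. \<Sum>j<m. S i j * (norm (w j))^2)
        - 2 * (\<Sum>i<m. \<Sum>j<m. S i j * (w i \<bullet> w j))"
    by (simp add: power2_norm_eq_inner inner_diff_left inner_diff_right inner_commute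
        algebra_simps sum.distrib sum_subtractf sum_distrib_left)
  then show ?thesis using row col by simp
qed

definition Qf where
  "Qf E m p w = (\<Sum>i<m. \<Sum>j<m. Smat E m p i j * (norm (w i - w j))^2) / 2"

lemma Qf_nonneg: "Qf E m p w \<ge> 0"
  unfolding Qf_def by (intro divide_nonneg_pos sum_nonneg mult_nonneg_nonneg Smat_nonneg) auto

lemma arc_bound:
  fixes w :: "nat \<Rightarrow> real^'n"
  assumes ab: "(a, b) \<in> arcs E m p"
  shows "norm (w a - w b) \<le> sqrt (2 * real m) * sqrt (Qf E m p w)"
proof -
  have a: "a < m" "b < m" "E p a b" using ab unfolding arcs_def by auto
  have an: "a \<in> nbrs E m p b" using a unfolding nbrs_def by auto
  have fin: "finite (nbrs E m p b)" unfolding nbrs_def by auto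
  have cpos: "card (nbrs E m p b) > 0" using an fin card_gt_0_iff by blast
  have cle: "card (nbrs E m p b) \<le> m"
  proof -
    have "nbrs E m p b \<subseteq> {..<m}" unfolding nbrs_def by auto
    then show ?thesis using card_mono[of "{..<m}"] by fastforce
  qed
  have S: "Smat E m p b a = 1 / real (card (nbrs E m p b))" unfolding Smat_def using an by simp
  have Sge: "1 / real m \<le> Smat E m p b a" unfolding S using cpos cle
    by (simp add: frac_le)
  have mpos: "real m > 0" using a by simp
  have tm: "Smat E m p b a * (norm (w b - w a))^2 \<le> 2 * Qf E m p w"
  proof -
    have "Smat E m p b a * (norm (w b - w a))^2 \<le> (\<Sum>j<m. Smat E m p b j * (norm (w b - w j))^2)"
      using a by (intro member_le_sum[where f="\<lambda>j. Smat E m p b j * (norm (w b - w j))^2"])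
        (auto intro: mult_nonneg_nonneg Smat_nonneg)
    also have "\<dots> \<le> (\<Sum>i<m. \<Sum>j<m. Smat E m p i j * (norm (w i - w j))^2)"
      using a by (intro member_le_sum[where f="\<lambda>i. \<Sum>j<m. Smat E m p i j * (norm (w i - w j))^2"])
        (auto intro!: sum_nonneg mult_nonneg_nonneg Smat_nonneg)
    finally show ?thesis unfolding Qf_def by simp
  qed
  have "(norm (w a - w b))^2 = real m * ((1 / real m) * (norm (w b - w a))^2)"
    using mpos by (simp add: norm_minus_commute)
  also have "\<dots> \<le> real m * (Smat E m p b a * (norm (w b - w a))^2)"
    using Sge mpos by (intro mult_left_mono mult_right_mono) auto
  also have "\<dots> \<le> real m * (2 * Qf E m p w)" using tm mpos by (intro mult_left_mono) auto
  finally have "(norm (w a - w b))^2 \<le> (sqrt (2 * real m) * sqrt (Qf E m p w))^2"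
    using Qf_nonneg[of E m p w] mpos by (simp add: power_mult_distrib)
  then show ?thesis by (rule power2_le_imp_le) (simp add: Qf_nonneg)
qed

lemma path_bound:
  assumes "(i, j) \<in> (arcs E m p)\<^sup>*"
  shows "\<exists>L\<ge>0. \<forall>w :: nat \<Rightarrow> real^'n. norm (w i - w j) \<le> L * sqrt (Qf E m p w)"
  using assms
proof (induction rule: rtrancl_induct)
  case base
  show ?case by (intro exI[of _ 0]) simp
next
  case (step k j)
  then obtain L where L: "L \<ge> 0" "\<forall>w :: nat \<Rightarrow> real^'n. norm (w i - w k) \<le> L * sqrt (Qf E m p w)" by blast
  show ?case
  proof (intro exI conjI allI)
    show "L + sqrt (2 * real m) \<ge> 0" using L by simp
    fix w :: "nat \<Rightarrow> real^'n"
    have "norm (w i - w j) \<le> norm (w i - w k) + norm (w k - w j)" by (rule norm_diff_triangle_ineq[of "w i" "w k" "w k" "w j", simplified])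
    also have "\<dots> \<le> L * sqrt (Qf E m p w) + sqrt (2 * real m) * sqrt (Qf E m p w)"
      using L(2) arc_bound[OF step(2), of w] by (intro add_mono) auto
    finally show "norm (w i - w j) \<le> (L + sqrt (2 * real m)) * sqrt (Qf E m p w)"
      by (simp add: algebra_simps)
  qed
qed

lemma consensus:
  fixes Vs :: "nat \<Rightarrow> (real^'n) set"
  assumes m: "m > 0" and fin: "finite P"
    and graphs: "\<forall>p\<in>P. strongly_connected E m p \<and> doubly_stochastic m (Smat E m p)"
    and sub: "\<forall>i<m. subspace (Vs i)" and int: "\<forall>z. (\<forall>i<m. z \<in> Vs i) \<longrightarrow> z = 0"
  shows "\<exists>\<beta>>0. \<forall>p\<in>P. \<forall>w::nat\<Rightarrow>real^'n. (\<forall>i<m. w i \<in> Vs i) \<longrightarrow>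
     \<beta> * (\<Sum>i<m. (norm (w i))^2) \<le> (\<Sum>i<m. (norm (w i))^2) - (\<Sum>i<m. \<Sum>j<m. Smat E m p i j * (w i \<bullet> w j))"
proof -
  obtain \<gamma> where \<gamma>: "\<gamma> > 0" "\<And>z. \<gamma> * (norm z)^2 \<le> (\<Sum>i<m. (norm (z - orth_proj (Vs i) z))^2)"
    using gamma_lemma[OF sub int] by blast
  define I where "I = P \<times> {..<m} \<times> {..<m}"
  have finI: "finite I" unfolding I_def using fin by simp
  have "\<forall>x\<in>I. \<exists>L. L \<ge> 0 \<and> (\<forall>w :: nat \<Rightarrow> real^'n. norm (w (fst (snd x)) - w (snd (snd x))) \<le> L * sqrt (Qf E m (fst x) w))"
  proof
    fix x assume "x \<in> I"
    then have x: "fst x \<in> P" "fst (snd x) < m" "snd (snd x) < m" unfolding I_def by auto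
    then have "strongly_connected E m (fst x)" using graphs by blast
    then have "(fst (snd x), snd (snd x)) \<in> (arcs E m (fst x))\<^sup>*"
      using x unfolding strongly_connected_def by blast
    then show "\<exists>L. L \<ge> 0 \<and> (\<forall>w :: nat \<Rightarrow> real^'n. norm (w (fst (snd x)) - w (snd (snd x))) \<le> L * sqrt (Qf E m (fst x) w))"
      by (rule path_bound)
  qed
  then have "\<exists>Lf. \<forall>x\<in>I. Lf x \<ge> 0 \<and> (\<forall>w :: nat \<Rightarrow> real^'n. norm (w (fst (snd x)) - w (snd (snd x))) \<le> Lf x * sqrt (Qf E m (fst x) w))"
    by (rule bchoice)
  then obtain Lf where Lf: "\<forall>x\<in>I. Lf x \<ge> 0 \<and> (\<forall>w :: nat \<Rightarrow> real^'n. norm (w (fst (snd x)) - w (snd (snd x))) \<le> Lf x * sqrt (Qf E m (fst x) w))" ..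
  define L where "L = (\<Sum>x\<in>I. Lf x)"
  have L0: "L \<ge> 0" unfolding L_def using Lf by (simp add: sum_nonneg)
  have Lb: "norm (w i - w j) \<le> L * sqrt (Qf E m p w)" if "p \<in> P" "i < m" "j < m" for p i j and w :: "nat \<Rightarrow> real^'n"
  proof -
    have x: "(p, i, j) \<in> I" unfolding I_def using that by auto
    have "Lf (p, i, j) \<le> L" unfolding L_def using x finI Lf by (intro member_le_sum) auto
    then have "Lf (p, i, j) * sqrt (Qf E m p w) \<le> L * sqrt (Qf E m p w)" by (intro mult_right_mono) (auto simp: Qf_nonneg)
    moreover have "norm (w i - w j) \<le> Lf (p, i, j) * sqrt (Qf E m p w)"
      using bspec[OF Lf x] by simp
    ultimately show ?thesis by linarith
  qed
  define K where "K = real m * (2 * real m / \<gamma> + 2) * L^2"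
  have K0: "K \<ge> 0" unfolding K_def using \<gamma> by simp
  define \<beta> where "\<beta> = 1 / (K + 1)"
  have \<beta>: "\<beta> > 0" "\<beta> * K \<le> 1" unfolding \<beta>_def using K0 by (auto simp: field_simps)
  show ?thesis
  proof (intro exI conjI ballI allI impI)
    show "\<beta> > 0" by fact
    fix p w assume p: "p \<in> P" and w: "\<forall>i<m. w i \<in> Vs i"
    define Q where "Q = Qf E m p w"
    have Q0: "Q \<ge> 0" unfolding Q_def by (rule Qf_nonneg)
    define D where "D = L * sqrt Q"
    have D0: "D \<ge> 0" unfolding D_def using L0 Q0 by simp
    have DQ: "D^2 = L^2 * Q" unfolding D_def using Q0 by (simp add: power_mult_distrib)
    have dist: "norm (w 0 - w i) \<le> D" if "i < m" for i using Lb[OF p m that] unfolding D_def Q_def .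
    have res: "(norm (w 0 - orth_proj (Vs i) (w 0)))^2 \<le> D^2" if i: "i < m" for i
    proof -
      have Vi: "subspace (Vs i)" using sub i by blast
      have "w 0 - orth_proj (Vs i) (w 0) = (w 0 - w i) - orth_proj (Vs i) (w 0 - w i)"
        using orth_proj_id[OF Vi] w i orth_proj_linear[OF Vi] by (simp add: linear_diff)
      then have "(norm (w 0 - orth_proj (Vs i) (w 0)))^2 = (norm ((w 0 - w i) - orth_proj (Vs i) (w 0 - w i)))^2"
        by (simp only:)
      then have "(norm (w 0 - orth_proj (Vs i) (w 0)))^2 \<le> (norm (w 0 - w i))^2"
        using orth_proj_pyth[OF Vi, of "w 0 - w i"] zero_le_power2[of "norm (orth_proj (Vs i) (w 0 - w i))"]
        by linarith
      also have "\<dots> \<le> D^2" using dist[OF i] by (simp add: power_mono)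
      finally show ?thesis .
    qed
    have "\<gamma> * (norm (w 0))^2 \<le> (\<Sum>i<m. (norm (w 0 - orth_proj (Vs i) (w 0)))^2)" by (rule \<gamma>(2))
    also have "\<dots> \<le> (\<Sum>i<m. D^2)" using res by (intro sum_mono) auto
    finally have w0: "(norm (w 0))^2 \<le> real m * D^2 / \<gamma>" using \<gamma> by (simp add: field_simps)
    have wi: "(norm (w i))^2 \<le> (2 * real m / \<gamma> + 2) * D^2" if i: "i < m" for i
    proof -
      have "norm (w i) \<le> norm (w 0) + D" using dist[OF i] norm_triangle_ineq3[of "w i" "w 0"]
        by (metis add.commute norm_minus_commute norm_triangle_sub order_trans add_left_mono)
      then have "(norm (w i))^2 \<le> (norm (w 0) + D)^2" by (simp add: power_mono)
      also have "\<dots> \<le> 2 * (norm (w 0))^2 + 2 * D^2"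
        using amgm5[of "norm (w 0)" D] by (simp add: power2_sum)
      also have "\<dots> \<le> 2 * (real m * D^2 / \<gamma>) + 2 * D^2" using w0 by simp
      finally show ?thesis by (simp add: algebra_simps)
    qed
    have "(\<Sum>i<m. (norm (w i))^2) \<le> (\<Sum>i<m. (2 * real m / \<gamma> + 2) * D^2)" using wi by (intro sum_mono) auto
    also have "\<dots> = K * Q" unfolding K_def DQ by simp
    finally have sK: "(\<Sum>i<m. (norm (w i))^2) \<le> K * Q" .
    have "\<beta> * (\<Sum>i<m. (norm (w i))^2) \<le> \<beta> * (K * Q)" using sK \<beta> by (intro mult_left_mono) auto
    also have "\<dots> \<le> Q" using \<beta>(2) Q0 mult_right_mono[of "\<beta> * K" 1 Q] by (simp add: mult.assoc)
    also have "Q = (\<Sum>i<m. (norm (w i))^2) - (\<Sum>i<m. \<Sum>j<m. Smat E m p i j * (w i \<bullet> w j))"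
    proof -
      have "doubly_stochastic m (Smat E m p)" using graphs p by blast
      from ds_identity[OF this, of w] show ?thesis unfolding Q_def Qf_def by simp
    qed
    finally show "\<beta> * (\<Sum>i<m. (norm (w i))^2) \<le> (\<Sum>i<m. (norm (w i))^2) - (\<Sum>i<m. \<Sum>j<m. Smat E m p i j * (w i \<bullet> w j))" .
  qed
qed



lemma ab_le: "(a::real) * b \<le> a^2 / (2 * k) + k * b^2 / 2" if "k > 0"
proof -
  have "0 \<le> (a - k * b)^2" by simp
  then have "2 * k * (a * b) \<le> a^2 + k^2 * b^2" by (simp add: power2_diff power_mult_distrib algebra_simps)
  then show ?thesis using that by (simp add: field_simps power2_eq_square)
qed

lemma kernel_subspace: "subspace {x::real^'n. out_map C s i x = (\<lambda>_. 0)}"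
  unfolding out_ker subspace_def by (auto simp: inner_add_right)

lemma kernel_all_subspace: "subspace {x::real^'n. \<forall>i<m. out_map C s i x = (\<lambda>_. 0)}"
  unfolding out_ker subspace_def by (auto simp: inner_add_right)

lemma unobs_ker: "x \<in> unobs A C s i \<Longrightarrow> out_map C s i x = (\<lambda>_. 0)"
  unfolding unobs_def using li_sub[OF kernel_subspace] by blast

lemma unobs_Ct: "x \<in> unobs A C s i \<Longrightarrow> Ct C s i x = 0"
  using unobs_ker[of x A C s i] by (simp add: Ct_zero_iff out_ker)

lemma unobs_subspace: "subspace (unobs A C s i)"
  unfolding unobs_def by (rule li_subspace)

lemma unobs_inv: "x \<in> unobs A C s i \<Longrightarrow> A *v x \<in> unobs A C s i"
  unfolding unobs_def by (rule li_inv)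

lemma observable_quotient:
  fixes A :: "real^'n^'n" and C :: "nat \<Rightarrow> nat \<Rightarrow> real^'n" and s :: "nat \<Rightarrow> nat" and i :: nat
  defines "V \<equiv> unobs A C s i"
  defines "X \<equiv> {x. \<forall>v\<in>V. x \<bullet> v = 0}"
  shows "\<forall>U. subspace U \<and> U \<subseteq> X \<and> (\<forall>u\<in>U. Ct C s i u = 0) \<and> (\<forall>u\<in>U. (\<lambda>x. A *v x - orth_proj V (A *v x)) u \<in> U) \<longrightarrow> U \<subseteq> {0}"
proof (intro allI impI)
  fix U assume U: "subspace U \<and> U \<subseteq> X \<and> (\<forall>u\<in>U. Ct C s i u = 0) \<and> (\<forall>u\<in>U. (\<lambda>x. A *v x - orth_proj V (A *v x)) u \<in> U)"
  have sV: "subspace V" unfolding V_def by (rule unobs_subspace)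
  define W where "W = {u + v |u v. u \<in> U \<and> v \<in> V}"
  have sW: "subspace W" unfolding W_def using U sV by (intro subspace_sums) auto
  have invW: "A_invariant A W" unfolding A_invariant_def
  proof
    fix y assume "y \<in> W"
    then obtain u v where uv: "y = u + v" "u \<in> U" "v \<in> V" unfolding W_def by blast
    have "A *v y = (A *v u - orth_proj V (A *v u)) + (orth_proj V (A *v u) + A *v v)"
      unfolding uv by (simp add: matrix_vector_right_distrib)
    moreover have "A *v u - orth_proj V (A *v u) \<in> U" using U uv by blast
    moreover have "orth_proj V (A *v u) + A *v v \<in> V"
      using sV orth_proj_in unobs_inv uv(3) unfolding V_def by (blast intro: subspace_add)
    ultimately show "A *v y \<in> W" unfolding W_def by blast
  qed
  have kW: "W \<subseteq> {x. out_map C s i x = (\<lambda>_. 0)}"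
  proof
    fix y assume "y \<in> W"
    then obtain u v where uv: "y = u + v" "u \<in> U" "v \<in> V" unfolding W_def by blast
    have "\<forall>k<s i. C i k \<bullet> u = 0" using U uv Ct_zero_iff by blast
    moreover have "\<forall>k<s i. C i k \<bullet> v = 0" using unobs_ker[of v A C s i] uv(3) unfolding V_def out_ker by blast
    ultimately show "y \<in> {x. out_map C s i x = (\<lambda>_. 0)}" unfolding out_ker uv by (simp add: inner_add_right)
  qed
  have WV: "W \<subseteq> V" unfolding V_def unobs_def using li_max[OF sW invW kW] .
  show "U \<subseteq> {0}"
  proof
    fix u assume u: "u \<in> U"
    then have "u = u + 0" by simp
    then have "u \<in> W" unfolding W_def using u sV subspace_0 by blast
    then have "u \<in> V" using WV by blast
    moreover have "u \<in> X" using U u by blast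
    ultimately have "u \<bullet> u = 0" unfolding X_def by blast
    then show "u \<in> {0}" by simp
  qed
qed

lemma decay_ineq:
  fixes A :: "real^'n^'n" and e :: "nat \<Rightarrow> real^'n" and V :: "nat \<Rightarrow> (real^'n) set"
    and L :: "nat \<Rightarrow> real^'n \<Rightarrow> real^'n" and B :: "nat \<Rightarrow> real^'n \<Rightarrow> real^'n \<Rightarrow> real"
    and S :: "nat \<Rightarrow> nat \<Rightarrow> real"
  assumes m: "m > 0"
    and sub: "\<And>i. i < m \<Longrightarrow> subspace (V i)"
    and Ainv: "\<And>i v. i < m \<Longrightarrow> v \<in> V i \<Longrightarrow> A *v v \<in> V i"
    and Llin: "\<And>i. i < m \<Longrightarrow> linear (L i)"
    and Lker: "\<And>i v. i < m \<Longrightarrow> v \<in> V i \<Longrightarrow> L i v = 0"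
    and LX: "\<And>i y v. i < m \<Longrightarrow> v \<in> V i \<Longrightarrow> L i y \<bullet> v = 0"
    and aA: "\<And>y. norm (A *v y) \<le> aA * norm y" "aA \<ge> 0"
    and Bbil: "\<And>i. i < m \<Longrightarrow> bilinear (B i)"
    and Bpos: "\<And>i y. i < m \<Longrightarrow> (\<forall>v\<in>V i. y \<bullet> v = 0) \<Longrightarrow> \<alpha> * (norm y)^2 \<le> B i y y"
    and \<alpha>: "\<alpha> > 0"
    and Bdec: "\<And>i y. i < m \<Longrightarrow> (\<forall>v\<in>V i. y \<bullet> v = 0) \<Longrightarrow>
         B i y ((A *v y - orth_proj (V i) (A *v y)) + L i y) \<le> - (lam + 1) * B i y y"
    and cons: "\<And>w. (\<forall>i<m. w i \<in> V i) \<Longrightarrow>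
         \<beta> * (\<Sum>i<m. (norm (w i))^2) \<le> (\<Sum>i<m. (norm (w i))^2) - (\<Sum>i<m. \<Sum>j<m. S i j * (w i \<bullet> w j))"
    and S: "\<And>i j. 0 \<le> S i j" "\<And>i j. S i j \<le> 1"
    and g: "g \<ge> 0" "g * \<beta> \<ge> aA + 1 + lam"
    and \<rho>: "\<rho> > 0" "\<rho> * \<alpha> \<ge> aA^2 / 2 + real m ^ 2 * g^2 / 2"
  defines "d \<equiv> (\<lambda>i. A *v e i + L i (e i) - g *\<^sub>R orth_proj (V i) (e i - (\<Sum>j<m. S i j *\<^sub>R e j)))"
  shows "(\<Sum>i<m. 2 * (orth_proj (V i) (e i) \<bullet> orth_proj (V i) (d i))
             + 2 * \<rho> * B i (e i - orth_proj (V i) (e i)) (d i - orth_proj (V i) (d i)))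
         \<le> - 2 * lam * (\<Sum>i<m. orth_proj (V i) (e i) \<bullet> orth_proj (V i) (e i)
             + \<rho> * B i (e i - orth_proj (V i) (e i)) (e i - orth_proj (V i) (e i)))"
proof -
  define P where "P i = orth_proj (V i)" for i
  define w where "w i = P i (e i)" for i
  define u where "u i = e i - P i (e i)" for i
  define r where "r i = e i - (\<Sum>j<m. S i j *\<^sub>R e j)" for i
  have Plin: "linear (P i)" if "i < m" for i unfolding P_def using sub[OF that] by (rule orth_proj_linear)
  have wV: "w i \<in> V i" if "i < m" for i unfolding w_def P_def using sub[OF that] by (rule orth_proj_in)
  have uX: "u i \<bullet> v = 0" if "i < m" "v \<in> V i" for i v
    unfolding u_def P_def using sub[OF that(1)] that(2) by (rule orth_proj_orth)
  have ewu: "e i = w i + u i" for i unfolding w_def u_def by simp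
  have Pid: "P i v = v" if "i < m" "v \<in> V i" for i v unfolding P_def using sub[OF that(1)] that(2) by (rule orth_proj_id)
  have P0: "P i y = 0" if "i < m" "\<forall>v\<in>V i. y \<bullet> v = 0" for i y
    unfolding P_def using sub[OF that(1)] that(2) by (intro orth_proj_zero) auto
  have Pin: "P i y \<in> V i" if "i < m" for i y unfolding P_def using sub[OF that] by (rule orth_proj_in)
  have Qd: "d i - P i (d i) = (A *v u i - P i (A *v u i)) + L i (u i)" if i: "i < m" for i
  proof -
    have Aw: "A *v w i - P i (A *v w i) = 0" using Pid[OF i Ainv[OF i wV[OF i]]] by simp
    have "L i (e i) = L i (w i) + L i (u i)"
      by (subst ewu[of i]) (rule linear_add[OF Llin[OF i]])
    then have Le: "L i (e i) = L i (u i)" using Lker[OF i wV[OF i]] by simp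
    have PL: "P i (L i (u i)) = 0" using P0[OF i] LX[OF i] by blast
    have PP: "P i (P i (r i)) = P i (r i)" using Pid[OF i Pin[OF i]] .
    have deq: "d i = A *v w i + A *v u i + L i (u i) - g *\<^sub>R P i (r i)"
      unfolding d_def P_def[symmetric] r_def[symmetric] Le by (subst ewu[of i]) (simp add: matrix_vector_right_distrib)
    have Pd: "P i (d i) = P i (A *v w i) + P i (A *v u i) + P i (L i (u i)) - g *\<^sub>R P i (P i (r i))"
      unfolding deq using Plin[OF i] by (simp add: linear_add linear_diff linear_scale)
    have Aw': "P i (A *v w i) = A *v w i" using Aw by simp
    show ?thesis unfolding Pd unfolding deq Aw' PL PP by simp
  qed
  have uXall: "\<forall>v\<in>V i. u i \<bullet> v = 0" if "i < m" for i using uX[OF that] by blast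
  have part3: "B i (u i) (d i - P i (d i)) \<le> - (lam + 1) * B i (u i) (u i)" if i: "i < m" for i
    using Bdec[OF i uXall[OF i]] Qd[OF i] unfolding P_def by simp
  have wd: "w i \<bullet> P i (d i) = w i \<bullet> (A *v e i) - g * ((norm (w i))^2 - (\<Sum>j<m. S i j * (w i \<bullet> w j)))
      + g * (\<Sum>j<m. S i j * (w i \<bullet> u j))" if i: "i < m" for i
  proof -
    have 1: "w i \<bullet> P i (d i) = w i \<bullet> d i" unfolding P_def using sub[OF i] wV[OF i] by (rule orth_proj_inner)
    have 2: "w i \<bullet> P i (r i) = w i \<bullet> r i" unfolding P_def using sub[OF i] wV[OF i] by (rule orth_proj_inner)
    have 3: "w i \<bullet> L i (e i) = 0" using LX[OF i wV[OF i]] by (simp add: inner_commute)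
    have 4: "w i \<bullet> e i = (norm (w i))^2" using uX[OF i wV[OF i]] ewu[of i]
      by (simp add: inner_add_right power2_norm_eq_inner inner_commute)
    have 5: "w i \<bullet> (\<Sum>j<m. S i j *\<^sub>R e j) = (\<Sum>j<m. S i j * (w i \<bullet> w j)) + (\<Sum>j<m. S i j * (w i \<bullet> u j))"
      by (simp add: inner_sum_right ewu inner_add_right sum.distrib algebra_simps)
    have "w i \<bullet> d i = w i \<bullet> (A *v e i) + w i \<bullet> L i (e i) - g * (w i \<bullet> P i (r i))"
      unfolding d_def P_def[symmetric] r_def[symmetric] by (simp add: inner_diff_right inner_add_right)
    then show ?thesis unfolding 1 2 3 using 4 5 unfolding r_def by (simp add: inner_diff_right algebra_simps)
  qed
  define W2 where "W2 = (\<Sum>i<m. (norm (w i))^2)"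
  define U2 where "U2 = (\<Sum>i<m. (norm (u i))^2)"
  define BU where "BU = (\<Sum>i<m. B i (u i) (u i))"
  have T1: "w i \<bullet> (A *v e i) \<le> (aA + 1/2) * (norm (w i))^2 + aA^2/2 * (norm (u i))^2" if i: "i < m" for i
  proof -
    have "w i \<bullet> (A *v e i) \<le> norm (w i) * (aA * norm (e i))"
      using Cauchy_Schwarz_ineq2[of "w i" "A *v e i"] aA(1)[of "e i"]
      by (meson abs_le_D1 mult_left_mono norm_ge_zero order_trans)
    also have "\<dots> \<le> norm (w i) * (aA * (norm (w i) + norm (u i)))"
      using aA(2) ewu[of i] norm_triangle_ineq[of "w i" "u i"] by (intro mult_left_mono) auto
    also have "\<dots> = aA * (norm (w i))^2 + norm (w i) * (aA * norm (u i))" by (simp add: algebra_simps power2_eq_square)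
    also have "norm (w i) * (aA * norm (u i)) \<le> (norm (w i))^2 / (2 * 1) + 1 * (aA * norm (u i))^2 / 2"
      by (rule ab_le) simp
    finally show ?thesis by (simp add: power_mult_distrib algebra_simps)
  qed
  have T3: "g * (\<Sum>j<m. S i j * (w i \<bullet> u j)) \<le> (\<Sum>j<m. (norm (w i))^2 / (2 * real m) + real m * g^2 * (norm (u j))^2 / 2)" if i: "i < m" for i
  proof -
    have "g * (\<Sum>j<m. S i j * (w i \<bullet> u j)) = (\<Sum>j<m. g * S i j * (w i \<bullet> u j))" by (simp add: sum_distrib_left mult.assoc)
    also have "\<dots> \<le> (\<Sum>j<m. (norm (w i))^2 / (2 * real m) + real m * g^2 * (norm (u j))^2 / 2)"
    proof (rule sum_mono)
      fix j assume "j \<in> {..<m}"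
      have "g * S i j * (w i \<bullet> u j) \<le> g * S i j * (norm (w i) * norm (u j))"
        using g(1) S(1)[of i j] Cauchy_Schwarz_ineq2[of "w i" "u j"] by (intro mult_left_mono) auto
      also have "\<dots> \<le> g * (norm (w i) * norm (u j))"
      proof -
        have "g * S i j \<le> g" using mult_left_mono[OF S(2)[of i j] g(1)] by simp
        then show ?thesis by (intro mult_right_mono) auto
      qed
      also have "\<dots> = norm (w i) * (g * norm (u j))" by simp
      also have "\<dots> \<le> (norm (w i))^2 / (2 * real m) + real m * (g * norm (u j))^2 / 2"
        using m by (intro ab_le) simp
      finally show "g * S i j * (w i \<bullet> u j) \<le> (norm (w i))^2 / (2 * real m) + real m * g^2 * (norm (u j))^2 / 2"
        by (simp add: power_mult_distrib)
    qed
    finally show ?thesis .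
  qed
  have sumT3: "(\<Sum>i<m. \<Sum>j<m. (norm (w i))^2 / (2 * real m) + real m * g^2 * (norm (u j))^2 / 2)
      = W2 / 2 + real m ^ 2 * g^2 / 2 * U2"
  proof -
    have "(\<Sum>i<m. \<Sum>j<m. (norm (w i))^2 / (2 * real m) + real m * g^2 * (norm (u j))^2 / 2)
        = (\<Sum>i<m. real m * ((norm (w i))^2 / (2 * real m))) + real m * (\<Sum>j<m. real m * g^2 * (norm (u j))^2 / 2)"
      by (simp add: sum.distrib)
    also have "\<dots> = (\<Sum>i<m. (norm (w i))^2) / 2 + real m ^ 2 * g^2 / 2 * (\<Sum>j<m. (norm (u j))^2)"
      using m by (simp add: sum_distrib_left sum_divide_distrib power2_eq_square algebra_simps)
    finally show ?thesis unfolding W2_def U2_def .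
  qed
  have consw: "\<beta> * W2 \<le> W2 - (\<Sum>i<m. \<Sum>j<m. S i j * (w i \<bullet> w j))"
    unfolding W2_def using cons[of w] wV by blast
  have sum_wd: "(\<Sum>i<m. w i \<bullet> P i (d i)) \<le> - lam * W2 + (aA^2 / 2 + real m ^ 2 * g^2 / 2) * U2"
  proof -
    have "(\<Sum>i<m. w i \<bullet> P i (d i)) = (\<Sum>i<m. w i \<bullet> (A *v e i)) - g * (W2 - (\<Sum>i<m. \<Sum>j<m. S i j * (w i \<bullet> w j)))
        + (\<Sum>i<m. g * (\<Sum>j<m. S i j * (w i \<bullet> u j)))"
      unfolding W2_def by (simp add: wd sum.distrib sum_subtractf sum_distrib_left[symmetric] right_diff_distrib[symmetric])
    also have "\<dots> \<le> (\<Sum>i<m. (aA + 1/2) * (norm (w i))^2 + aA^2/2 * (norm (u i))^2) - g * (\<beta> * W2)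
        + (W2 / 2 + real m ^ 2 * g^2 / 2 * U2)"
    proof -
      have "(\<Sum>i<m. w i \<bullet> (A *v e i)) \<le> (\<Sum>i<m. (aA + 1/2) * (norm (w i))^2 + aA^2/2 * (norm (u i))^2)"
        using T1 by (intro sum_mono) auto
      moreover have "g * (\<beta> * W2) \<le> g * (W2 - (\<Sum>i<m. \<Sum>j<m. S i j * (w i \<bullet> w j)))"
        using consw g(1) by (intro mult_left_mono) auto
      moreover have "(\<Sum>i<m. g * (\<Sum>j<m. S i j * (w i \<bullet> u j))) \<le> W2 / 2 + real m ^ 2 * g^2 / 2 * U2"
        using T3 sumT3 by (metis (no_types, lifting) lessThan_iff sum_mono)
      ultimately show ?thesis by linarith
    qed
    also have "\<dots> = (aA + 1 - g * \<beta>) * W2 + (aA^2 / 2 + real m ^ 2 * g^2 / 2) * U2"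
    proof -
      have "(\<Sum>i<m. (aA + 1/2) * (norm (w i))^2 + aA^2/2 * (norm (u i))^2) = (aA + 1/2) * W2 + aA^2/2 * U2"
        unfolding W2_def U2_def by (simp add: sum.distrib sum_distrib_left)
      then show ?thesis by (simp add: algebra_simps)
    qed
    also have "\<dots> \<le> - lam * W2 + (aA^2 / 2 + real m ^ 2 * g^2 / 2) * U2"
    proof -
      have "W2 \<ge> 0" unfolding W2_def by (simp add: sum_nonneg)
      then have "(aA + 1 - g * \<beta>) * W2 \<le> - lam * W2" using g(2) by (intro mult_right_mono) auto
      then show ?thesis by simp
    qed
    finally show ?thesis .
  qed
  have sumB: "(\<Sum>i<m. B i (u i) (d i - P i (d i))) \<le> - (lam + 1) * BU"
    unfolding BU_def sum_distrib_left using part3 by (intro sum_mono) auto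
  have BU: "\<alpha> * U2 \<le> BU" unfolding U2_def BU_def sum_distrib_left using Bpos uXall by (intro sum_mono) auto
  have U20: "U2 \<ge> 0" unfolding U2_def by (simp add: sum_nonneg)
  have "(\<Sum>i<m. 2 * (w i \<bullet> P i (d i)) + 2 * \<rho> * B i (u i) (d i - P i (d i)))
      = 2 * (\<Sum>i<m. w i \<bullet> P i (d i)) + 2 * \<rho> * (\<Sum>i<m. B i (u i) (d i - P i (d i)))"
    by (simp add: sum.distrib sum_distrib_left)
  also have "\<dots> \<le> 2 * (- lam * W2 + (aA^2 / 2 + real m ^ 2 * g^2 / 2) * U2) + 2 * \<rho> * (- (lam + 1) * BU)"
    using sum_wd sumB \<rho>(1) by (intro add_mono mult_left_mono) auto
  also have "\<dots> \<le> - 2 * lam * (W2 + \<rho> * BU)"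
  proof -
    have "(aA^2 / 2 + real m ^ 2 * g^2 / 2) * U2 \<le> \<rho> * \<alpha> * U2" using \<rho>(2) U20 by (rule mult_right_mono)
    also have "\<dots> \<le> \<rho> * BU" using BU \<rho>(1) by (simp add: mult.assoc mult_left_mono)
    finally show ?thesis by (simp add: algebra_simps)
  qed
  also have "W2 + \<rho> * BU = (\<Sum>i<m. w i \<bullet> w i + \<rho> * B i (u i) (u i))"
    unfolding W2_def BU_def by (simp add: sum.distrib sum_distrib_left power2_norm_eq_inner)
  finally show ?thesis unfolding w_def u_def P_def .
qed

lemma avg_eq:
  fixes y :: "nat \<Rightarrow> real^'n"
  assumes fin: "finite N" and Nm: "N \<subseteq> {..<m}" and c: "card N > 0"
  shows "y i - (1 / real (card N)) *\<^sub>R (\<Sum>j\<in>N. y j)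
       = (y i - z) - (\<Sum>j<m. (if j \<in> N then 1 / real (card N) else 0) *\<^sub>R (y j - z))"
proof -
  have "(\<Sum>j<m. (if j \<in> N then 1 / real (card N) else 0) *\<^sub>R (y j - z))
      = (\<Sum>j<m. if j \<in> N then (1 / real (card N)) *\<^sub>R (y j - z) else 0)"
    by (rule sum.cong) auto
  also have "\<dots> = (\<Sum>j\<in>{..<m} \<inter> N. (1 / real (card N)) *\<^sub>R (y j - z))"
    by (rule sum.inter_restrict[symmetric]) simp
  also have "{..<m} \<inter> N = N" using Nm by blast
  also have "(\<Sum>j\<in>N. (1 / real (card N)) *\<^sub>R (y j - z)) = (1 / real (card N)) *\<^sub>R (\<Sum>j\<in>N. y j) - z"
  proof -
    have "(\<Sum>j\<in>N. (1 / real (card N)) *\<^sub>R (y j - z)) = (1 / real (card N)) *\<^sub>R ((\<Sum>j\<in>N. y j) - (\<Sum>j\<in>N. z))"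
      by (simp add: scaleR_sum_right[symmetric] sum_subtractf)
    also have "(\<Sum>j\<in>N. z) = real (card N) *\<^sub>R z" by (rule sum_constant_scaleR)
    finally show ?thesis using c by (simp add: scaleR_diff_right)
  qed
  finally show ?thesis by simp
qed

lemma rhs_eq:
  fixes A :: "real^'n^'n" and Gf :: "nat \<Rightarrow> real^'n \<Rightarrow> real^'n"
  assumes lin: "linear (Gf i)" and gr: "is_graph_on E m (\<sigma> t)" and self: "E (\<sigma> t) i i" and i: "i < m"
  shows "observer_rhs A C (\<lambda>i k. Gf i (C i k)) s E m g \<sigma> x xs i t - A *v x t
    = A *v (xs i t - x t) + Gf i (Ct C s i (xs i t - x t))
      - g *\<^sub>R orth_proj (unobs A C s i) ((xs i t - x t) - (\<Sum>j<m. Smat E m (\<sigma> t) i j *\<^sub>R (xs j t - x t)))"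
proof -
  define N where "N = nbrs E m (\<sigma> t) i"
  have fin: "finite N" unfolding N_def nbrs_def by simp
  have Nm: "N \<subseteq> {..<m}" unfolding N_def nbrs_def by auto
  have iN: "i \<in> N" unfolding N_def nbrs_def using self i by simp
  have c: "card N > 0" using fin iN card_gt_0_iff by blast
  have avg: "xs i t - (1 / real (card N)) *\<^sub>R (\<Sum>j\<in>N. xs j t)
     = (xs i t - x t) - (\<Sum>j<m. Smat E m (\<sigma> t) i j *\<^sub>R (xs j t - x t))"
    unfolding Smat_def N_def[symmetric] by (rule avg_eq[OF fin Nm c])
  have gain: "gain_map (\<lambda>i k. Gf i (C i k)) s i (out_map C s i (xs i t)) - gain_map (\<lambda>i k. Gf i (C i k)) s i (out_map C s i (x t))
     = Gf i (Ct C s i (xs i t - x t))"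
    using lin Ct_linear[of C s i] by (simp add: gain_Ct linear_diff)
  show ?thesis unfolding observer_rhs_def N_def[symmetric] avg
    using gain by (simp add: matrix_vector_right_distrib algebra_simps)
qed



theorem theorem2:
  fixes A :: "real^'n^'n" and C :: "nat \<Rightarrow> nat \<Rightarrow> real^'n" and s :: "nat \<Rightarrow> nat"
    and m :: nat and P :: "'p set" and E :: "'p \<Rightarrow> nat \<Rightarrow> nat \<Rightarrow> bool" and lam :: real
  assumes "m > 1"
    and "jointly_observable A C s m"
    and "finite P"
    and "\<forall>p\<in>P. is_graph_on E m p \<and> (\<forall>i<m. E p i i) \<and> strongly_connected E m p
               \<and> doubly_stochastic m (Smat E m p)"
    and "lam > 0"
  shows "\<exists>K :: nat \<Rightarrow> nat \<Rightarrow> real^'n. \<exists>g0>0. \<forall>g\<ge>g0. \<exists>c>0.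
           \<forall>\<sigma> x xs. switching_signal P \<sigma> \<and>
              solves_ode x (\<lambda>t. A *v x t) \<and>
              (\<forall>i<m. solves_ode (xs i) (observer_rhs A C K s E m g \<sigma> x xs i))
            \<longrightarrow> (\<forall>t\<ge>0. err_norm m x xs t \<le> c * exp (- lam * t) * err_norm m x xs 0)"
proof -
  note m1 = assms(1) and jo = assms(2) and finP = assms(3) and gr = assms(4) and lam = assms(5)
  have m0: "m > 0" using m1 by simp
  define V where "V i = unobs A C s i" for i
  define X where "X i = {x::real^'n. \<forall>v\<in>V i. x \<bullet> v = 0}" for i
  have sV: "subspace (V i)" for i unfolding V_def by (rule unobs_subspace)
  have sX: "subspace (X i)" for i unfolding X_def subspace_def by (auto simp: inner_add_left)
  define AX where "AX i = (\<lambda>x. A *v x - orth_proj (V i) (A *v x))" for i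
  have linP: "linear (orth_proj (V i))" for i using sV by (rule orth_proj_linear)
  have linAX: "linear (AX i)" for i
  proof -
    have "linear (orth_proj (V i) \<circ> (\<lambda>x. A *v x))" by (rule linear_compose[OF matrix_vector_mul_linear linP])
    then show ?thesis unfolding AX_def using matrix_vector_mul_linear by (intro linear_compose_sub) (auto simp: o_def)
  qed
  have AXX: "\<forall>x\<in>X i. AX i x \<in> X i" for i
    unfolding AX_def X_def using orth_proj_orth[OF sV] by blast
  have obs: "\<forall>U. subspace U \<and> U \<subseteq> X i \<and> (\<forall>u\<in>U. Ct C s i u = 0) \<and> (\<forall>u\<in>U. AX i u \<in> U) \<longrightarrow> U \<subseteq> {0}" for i
    using observable_quotient[of A C s i] unfolding AX_def X_def V_def by simp
  have ex: "\<forall>i. \<exists>G B \<alpha>. linear G \<and> (\<forall>y. G y \<in> X i) \<and> bilinear B \<and> (\<forall>x y. B x y = B y x) \<and> \<alpha> > 0 \<and>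
     (\<forall>x\<in>X i. \<alpha> * (norm x)^2 \<le> B x x) \<and> (\<forall>x\<in>X i. B x (AX i x + G (Ct C s i x)) \<le> - (lam + 1) * B x x)"
    using stab[OF sX linAX AXX Ct_linear obs] by blast
  then obtain Gf Bf \<alpha>f where GBa: "\<And>i. linear (Gf i) \<and> (\<forall>y. Gf i y \<in> X i) \<and> bilinear (Bf i) \<and> (\<forall>x y. Bf i x y = Bf i y x) \<and> \<alpha>f i > 0 \<and>
     (\<forall>x\<in>X i. \<alpha>f i * (norm x)^2 \<le> Bf i x x) \<and> (\<forall>x\<in>X i. Bf i x (AX i x + Gf i (Ct C s i x)) \<le> - (lam + 1) * Bf i x x)"
    by metis
  define L where "L i y = Gf i (Ct C s i y)" for i y
  have linL: "linear (L i)" for i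
  proof -
    have "linear (Gf i \<circ> Ct C s i)" by (rule linear_compose[OF Ct_linear]) (use GBa in blast)
    then show ?thesis unfolding L_def by (simp add: o_def)
  qed
  obtain a0 where a0: "a0 > 0" "\<And>y. norm (A *v y) \<le> a0 * norm y"
    using linear_bounded_pos[OF matrix_vector_mul_linear[of A]] by blast
  have int: "\<forall>z. (\<forall>i<m. z \<in> V i) \<longrightarrow> z = 0"
  proof -
    define I where "I = {z. \<forall>i<m. z \<in> V i}"
    have sI: "subspace I" unfolding I_def subspace_def using sV
      by (auto simp: subspace_0 subspace_add subspace_mul)
    have iI: "A_invariant A I" unfolding A_invariant_def I_def V_def using unobs_inv by blast
    have kI: "I \<subseteq> {x. \<forall>i<m. out_map C s i x = (\<lambda>_. 0)}" unfolding I_def V_def using unobs_ker by blast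
    have "I \<subseteq> {0}" using li_max[OF sI iI kI] jo unfolding jointly_observable_def by simp
    then show ?thesis unfolding I_def by blast
  qed
  have gr': "\<forall>p\<in>P. strongly_connected E m p \<and> doubly_stochastic m (Smat E m p)" using gr by blast
  obtain \<beta> where \<beta>: "\<beta> > 0" and cons: "\<forall>p\<in>P. \<forall>w::nat\<Rightarrow>real^'n. (\<forall>i<m. w i \<in> V i) \<longrightarrow>
     \<beta> * (\<Sum>i<m. (norm (w i))^2) \<le> (\<Sum>i<m. (norm (w i))^2) - (\<Sum>i<m. \<Sum>j<m. Smat E m p i j * (w i \<bullet> w j))"
    using consensus[OF m0 finP gr'] sV int by blast
  define g0 where "g0 = (a0 + 1 + lam) / \<beta>"
  show ?thesis
  proof (rule exI[of _ "\<lambda>i k. Gf i (C i k)"], rule exI[of _ g0], intro conjI allI impI)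
    show "g0 > 0" unfolding g0_def using a0 lam \<beta> by simp
    fix g assume gg: "g \<ge> g0"
    have g: "g \<ge> 0" "g * \<beta> \<ge> a0 + 1 + lam"
    proof -
      show "g \<ge> 0" using gg \<open>g0 > 0\<close> by simp
      have "g0 * \<beta> = a0 + 1 + lam" unfolding g0_def using \<beta> by simp
      then show "g * \<beta> \<ge> a0 + 1 + lam" using mult_right_mono[OF gg, of \<beta>] \<beta> by simp
    qed
    define \<alpha> where "\<alpha> = Min (\<alpha>f ` {..<m})"
    have \<alpha>: "\<alpha> > 0" unfolding \<alpha>_def using m0 GBa by (subst Min_gr_iff) auto
    have \<alpha>le: "\<alpha> \<le> \<alpha>f i" if "i < m" for i unfolding \<alpha>_def using that by simp
    have "\<forall>i. \<exists>k>0. \<forall>a b. norm (Bf i a b) \<le> norm a * norm b * k"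
    proof
      fix i
      have "bounded_bilinear (Bf i)" using GBa bilinear_conv_bounded_bilinear by blast
      then show "\<exists>k>0. \<forall>a b. norm (Bf i a b) \<le> norm a * norm b * k" by (rule bounded_bilinear.pos_bounded)
    qed
    then obtain KBf where KBf: "\<And>i. KBf i > 0" "\<And>i a b. norm (Bf i a b) \<le> norm a * norm b * KBf i" by metis
    define KB where "KB = (\<Sum>i<m. KBf i)"
    have KBle: "KBf i \<le> KB" if "i < m" for i unfolding KB_def using that KBf(1)
      by (intro member_le_sum) (auto intro: less_imp_le)
    define \<rho> where "\<rho> = (a0^2 / 2 + real m ^ 2 * g^2 / 2) / \<alpha> + 1"
    have \<rho>: "\<rho> > 0" "\<rho> * \<alpha> \<ge> a0^2 / 2 + real m ^ 2 * g^2 / 2"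
    proof -
      have nn: "a0^2 / 2 + real m ^ 2 * g^2 / 2 \<ge> 0" by simp
      show "\<rho> > 0" unfolding \<rho>_def using \<alpha> nn by (intro add_nonneg_pos divide_nonneg_pos) auto
      show "\<rho> * \<alpha> \<ge> a0^2 / 2 + real m ^ 2 * g^2 / 2" unfolding \<rho>_def using \<alpha> by (simp add: field_simps)
    qed
    define lo where "lo = min 1 (\<rho> * \<alpha>)"
    define hi where "hi = 1 + \<rho> * KB"
    have lo: "lo > 0" unfolding lo_def using \<rho> \<alpha> by simp
    have hi: "hi > 0" unfolding hi_def using \<rho> KBf(1) KBle m0 by (intro add_pos_nonneg) (auto intro!: mult_nonneg_nonneg simp: KB_def sum_nonneg less_imp_le)
    define Wf where "Wf y = (\<Sum>i<m. orth_proj (V i) (y i) \<bullet> orth_proj (V i) (y i)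
        + \<rho> * Bf i (y i - orth_proj (V i) (y i)) (y i - orth_proj (V i) (y i)))" for y :: "nat \<Rightarrow> real^'n"
    have Wbounds: "lo * (\<Sum>i<m. (norm (y i))^2) \<le> Wf y \<and> Wf y \<le> hi * (\<Sum>i<m. (norm (y i))^2)" for y
    proof -
      have t: "lo * (norm (y i))^2 \<le> orth_proj (V i) (y i) \<bullet> orth_proj (V i) (y i)
        + \<rho> * Bf i (y i - orth_proj (V i) (y i)) (y i - orth_proj (V i) (y i))
        \<and> orth_proj (V i) (y i) \<bullet> orth_proj (V i) (y i)
        + \<rho> * Bf i (y i - orth_proj (V i) (y i)) (y i - orth_proj (V i) (y i)) \<le> hi * (norm (y i))^2"
        if i: "i < m" for i
      proof -
        define p where "p = orth_proj (V i) (y i)"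
        define q where "q = y i - p"
        have py: "(norm (y i))^2 = (norm p)^2 + (norm q)^2" unfolding p_def q_def by (rule orth_proj_pyth[OF sV])
        have pp: "p \<bullet> p = (norm p)^2" by (simp add: power2_norm_eq_inner)
        have qX: "q \<in> X i" unfolding q_def p_def X_def using orth_proj_orth[OF sV] by blast
        have Blo: "\<alpha> * (norm q)^2 \<le> Bf i q q"
          using GBa[of i] qX \<alpha>le[OF i] by (meson mult_right_mono order_trans zero_le_power2)
        have Bhi: "Bf i q q \<le> KB * (norm q)^2"
        proof -
          have "Bf i q q \<le> norm q * norm q * KBf i" using KBf(2)[of i q q] by simp
          also have "\<dots> \<le> KB * (norm q)^2" using KBle[OF i] by (simp add: power2_eq_square mult_right_mono algebra_simps)
          finally show ?thesis .
        qed
        have "lo * (norm (y i))^2 \<le> (norm p)^2 + \<rho> * Bf i q q"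
        proof -
          have "lo * (norm p)^2 \<le> (norm p)^2" unfolding lo_def using mult_right_mono[of "min 1 (\<rho> * \<alpha>)" 1 "(norm p)^2"] by simp
          moreover have "lo * (norm q)^2 \<le> \<rho> * Bf i q q"
          proof -
            have "lo * (norm q)^2 \<le> \<rho> * \<alpha> * (norm q)^2" unfolding lo_def using mult_right_mono[of "min 1 (\<rho> * \<alpha>)" "\<rho> * \<alpha>" "(norm q)^2"] by simp
            also have "\<dots> \<le> \<rho> * Bf i q q" using Blo \<rho> by (simp add: mult.assoc mult_left_mono)
            finally show ?thesis .
          qed
          ultimately show ?thesis unfolding py by (simp add: algebra_simps)
        qed
        moreover have "(norm p)^2 + \<rho> * Bf i q q \<le> hi * (norm (y i))^2"
        proof -
          have "\<rho> * Bf i q q \<le> \<rho> * KB * (norm q)^2" using Bhi \<rho> by (simp add: mult.assoc mult_left_mono)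
          moreover have "\<rho> * KB * (norm p)^2 \<ge> 0" using \<rho> KBle[OF i] KBf(1)[of i] by (intro mult_nonneg_nonneg) auto
          moreover have "(norm q)^2 \<ge> 0" by simp
          moreover have "hi * ((norm p)^2 + (norm q)^2) = (norm p)^2 + (norm q)^2 + \<rho> * KB * (norm p)^2 + \<rho> * KB * (norm q)^2"
            unfolding hi_def by (simp add: algebra_simps)
          ultimately show ?thesis unfolding py by linarith
        qed
        ultimately show ?thesis unfolding p_def q_def by (simp add: power2_norm_eq_inner)
      qed
      have "lo * (\<Sum>i<m. (norm (y i))^2) = (\<Sum>i<m. lo * (norm (y i))^2)" by (simp add: sum_distrib_left)
      also have "\<dots> \<le> Wf y" unfolding Wf_def using t by (intro sum_mono) auto
      finally have 1: "lo * (\<Sum>i<m. (norm (y i))^2) \<le> Wf y" .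
      have "Wf y \<le> (\<Sum>i<m. hi * (norm (y i))^2)" unfolding Wf_def using t by (intro sum_mono) auto
      also have "\<dots> = hi * (\<Sum>i<m. (norm (y i))^2)" by (simp add: sum_distrib_left)
      finally show ?thesis using 1 by simp
    qed
    show "\<exists>c>0. \<forall>\<sigma> x xs. switching_signal P \<sigma> \<and> solves_ode x (\<lambda>t. A *v x t) \<and>
              (\<forall>i<m. solves_ode (xs i) (observer_rhs A C (\<lambda>i k. Gf i (C i k)) s E m g \<sigma> x xs i))
            \<longrightarrow> (\<forall>t\<ge>0. err_norm m x xs t \<le> c * exp (- lam * t) * err_norm m x xs 0)"
    proof (rule exI[of _ "sqrt (hi / lo)"], intro conjI allI impI)
      show "sqrt (hi / lo) > 0" using hi lo by simp
      fix \<sigma> x xs and t :: real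
      assume H: "switching_signal P \<sigma> \<and> solves_ode x (\<lambda>t. A *v x t) \<and>
              (\<forall>i<m. solves_ode (xs i) (observer_rhs A C (\<lambda>i k. Gf i (C i k)) s E m g \<sigma> x xs i))"
        and t: "t \<ge> 0"
      define e where "e i t = xs i t - x t" for i t
      define ed where "ed i t = observer_rhs A C (\<lambda>i k. Gf i (C i k)) s E m g \<sigma> x xs i t - A *v x t" for i t
      have \<sigma>P: "\<sigma> t \<in> P" if "t \<ge> 0" for t using H that unfolding switching_signal_def by blast
      have de: "(e i has_vector_derivative ed i t) (at t within {t..})" if "i < m" "t \<ge> 0" for i t
      proof -
        have "(xs i has_vector_derivative observer_rhs A C (\<lambda>i k. Gf i (C i k)) s E m g \<sigma> x xs i t) (at t within {t..})"
          using H that unfolding solves_ode_def by blast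
        moreover have "(x has_vector_derivative A *v x t) (at t within {t..})"
          using H that unfolding solves_ode_def by blast
        ultimately show ?thesis unfolding e_def[abs_def] ed_def by (rule has_vector_derivative_diff)
      qed
      have ce: "continuous_on {0..} (e i)" if "i < m" for i
      proof -
        have "continuous_on {0..} (xs i)" "continuous_on {0..} x" using H that unfolding solves_ode_def by blast+
        then show ?thesis unfolding e_def[abs_def] by (rule continuous_on_diff)
      qed
      define W where "W t = Wf (\<lambda>i. e i t)" for t
      define W' where "W' t = (\<Sum>i<m. 2 * (orth_proj (V i) (e i t) \<bullet> orth_proj (V i) (ed i t))
             + 2 * \<rho> * Bf i (e i t - orth_proj (V i) (e i t)) (ed i t - orth_proj (V i) (ed i t)))" for t
      have blP: "bounded_linear (orth_proj (V i))" for i using linP linear_conv_bounded_linear by blast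
      have bbB: "bounded_bilinear (Bf i)" for i using GBa bilinear_conv_bounded_bilinear by blast
      have dW: "(W has_real_derivative W' t) (at t within {t..})" if t: "t \<ge> 0" for t
      proof -
        have di: "((\<lambda>t. orth_proj (V i) (e i t) \<bullet> orth_proj (V i) (e i t)
             + \<rho> * Bf i (e i t - orth_proj (V i) (e i t)) (e i t - orth_proj (V i) (e i t))) has_vector_derivative
             (2 * (orth_proj (V i) (e i t) \<bullet> orth_proj (V i) (ed i t))
             + 2 * \<rho> * Bf i (e i t - orth_proj (V i) (e i t)) (ed i t - orth_proj (V i) (ed i t)))) (at t within {t..})"
          if i: "i \<in> {..<m}" for i
        proof -
          have dP: "((\<lambda>t. orth_proj (V i) (e i t)) has_vector_derivative orth_proj (V i) (ed i t)) (at t within {t..})"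
            using bounded_linear.has_vector_derivative[OF blP de] i t by simp
          have dQ: "((\<lambda>t. e i t - orth_proj (V i) (e i t)) has_vector_derivative (ed i t - orth_proj (V i) (ed i t))) (at t within {t..})"
            using de[of i t] i t dP by (intro has_vector_derivative_diff) auto
          note d1 = bounded_bilinear.has_vector_derivative[OF bounded_bilinear_inner dP dP]
          note d2 = bounded_bilinear.has_vector_derivative[OF bbB dQ dQ]
          have d3: "((\<lambda>t. \<rho> * Bf i (e i t - orth_proj (V i) (e i t)) (e i t - orth_proj (V i) (e i t))) has_vector_derivative
             (\<rho> * (Bf i (e i t - orth_proj (V i) (e i t)) (ed i t - orth_proj (V i) (ed i t))
                   + Bf i (ed i t - orth_proj (V i) (ed i t)) (e i t - orth_proj (V i) (e i t))))) (at t within {t..})"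
            using has_vector_derivative_mult[OF has_vector_derivative_const d2] by simp
          have sym: "Bf i (ed i t - orth_proj (V i) (ed i t)) (e i t - orth_proj (V i) (e i t))
              = Bf i (e i t - orth_proj (V i) (e i t)) (ed i t - orth_proj (V i) (ed i t))" using GBa by blast
          show ?thesis using has_vector_derivative_add[OF d1 d3] unfolding sym
            by (simp add: inner_commute algebra_simps)
        qed
        have "((\<lambda>t. \<Sum>i<m. orth_proj (V i) (e i t) \<bullet> orth_proj (V i) (e i t)
             + \<rho> * Bf i (e i t - orth_proj (V i) (e i t)) (e i t - orth_proj (V i) (e i t))) has_vector_derivative W' t) (at t within {t..})"
          unfolding W'_def by (rule has_vector_derivative_sum) (rule di)
        then show ?thesis unfolding has_real_derivative_iff_has_vector_derivative W_def[abs_def] Wf_def .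
      qed
      have cW: "continuous_on {0..} W"
      proof -
        have ci: "continuous_on {0..} (\<lambda>t. orth_proj (V i) (e i t) \<bullet> orth_proj (V i) (e i t)
             + \<rho> * Bf i (e i t - orth_proj (V i) (e i t)) (e i t - orth_proj (V i) (e i t)))" if i: "i \<in> {..<m}" for i
        proof -
          have cP: "continuous_on {0..} (\<lambda>t. orth_proj (V i) (e i t))"
            using bounded_linear.continuous_on[OF blP ce] i by simp
          have cQ: "continuous_on {0..} (\<lambda>t. e i t - orth_proj (V i) (e i t))"
            using continuous_on_diff[OF ce cP] i by simp
          show ?thesis
            by (intro continuous_on_add continuous_on_inner cP continuous_on_mult continuous_on_const
                bounded_bilinear.continuous_on[OF bbB cQ cQ])
        qed
        show ?thesis unfolding W_def[abs_def] Wf_def by (rule continuous_on_sum) (rule ci)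
      qed
      have dec: "W' t \<le> - 2 * lam * W t" if t: "t \<ge> 0" for t
      proof -
        have pP: "\<sigma> t \<in> P" using \<sigma>P t .
        have grp: "is_graph_on E m (\<sigma> t)" "\<And>i. i < m \<Longrightarrow> E (\<sigma> t) i i" using gr pP by blast+
        have edd: "ed i t = A *v e i t + L i (e i t) - g *\<^sub>R orth_proj (V i) (e i t - (\<Sum>j<m. Smat E m (\<sigma> t) i j *\<^sub>R e j t))"
          if i: "i < m" for i
          unfolding ed_def e_def L_def V_def using rhs_eq[of Gf i E m \<sigma> t A C s g x xs] GBa grp i by blast
        have Smat_le: "Smat E m (\<sigma> t) i j \<le> 1" for i j
        proof (cases "j \<in> nbrs E m (\<sigma> t) i")
          case True
          have "finite (nbrs E m (\<sigma> t) i)" unfolding nbrs_def by simp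
          then have "card (nbrs E m (\<sigma> t) i) \<ge> 1" using True by (metis One_nat_def Suc_leI card_gt_0_iff empty_iff)
          then show ?thesis unfolding Smat_def using True by simp
        qed (simp add: Smat_def)
        have f_sub: "\<And>i. i < m \<Longrightarrow> subspace (V i)" using sV by blast
        have f_Ainv: "\<And>i v. i < m \<Longrightarrow> v \<in> V i \<Longrightarrow> A *v v \<in> V i" unfolding V_def by (rule unobs_inv)
        have f_Llin: "\<And>i. i < m \<Longrightarrow> linear (L i)" using linL by blast
        have f_Lker: "\<And>i v. i < m \<Longrightarrow> v \<in> V i \<Longrightarrow> L i v = 0"
          unfolding L_def V_def using unobs_Ct GBa linear_0 by metis
        have f_LX: "\<And>i y v. i < m \<Longrightarrow> v \<in> V i \<Longrightarrow> L i y \<bullet> v = 0"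
          unfolding L_def using GBa unfolding X_def by blast
        have f_Bbil: "\<And>i. i < m \<Longrightarrow> bilinear (Bf i)" using GBa by blast
        have f_Bpos: "\<And>i y. i < m \<Longrightarrow> (\<forall>v\<in>V i. y \<bullet> v = 0) \<Longrightarrow> \<alpha> * (norm y)^2 \<le> Bf i y y"
        proof -
          fix i y assume i: "i < m" and y: "\<forall>v\<in>V i. y \<bullet> v = 0"
          then have "y \<in> X i" unfolding X_def by simp
          then have "\<alpha>f i * (norm y)^2 \<le> Bf i y y" using GBa by blast
          moreover have "\<alpha> * (norm y)^2 \<le> \<alpha>f i * (norm y)^2" using \<alpha>le[OF i] by (simp add: mult_right_mono)
          ultimately show "\<alpha> * (norm y)^2 \<le> Bf i y y" by linarith
        qed
        have f_Bdec: "\<And>i y. i < m \<Longrightarrow> (\<forall>v\<in>V i. y \<bullet> v = 0) \<Longrightarrow>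
           Bf i y ((A *v y - orth_proj (V i) (A *v y)) + L i y) \<le> - (lam + 1) * Bf i y y"
        proof -
          fix i y assume i: "i < m" and y: "\<forall>v\<in>V i. y \<bullet> v = 0"
          then have "y \<in> X i" unfolding X_def by simp
          then show "Bf i y ((A *v y - orth_proj (V i) (A *v y)) + L i y) \<le> - (lam + 1) * Bf i y y"
            using GBa[of i] unfolding AX_def L_def by blast
        qed
        have f_cons: "\<And>w. (\<forall>i<m. w i \<in> V i) \<Longrightarrow>
           \<beta> * (\<Sum>i<m. (norm (w i))^2) \<le> (\<Sum>i<m. (norm (w i))^2) - (\<Sum>i<m. \<Sum>j<m. Smat E m (\<sigma> t) i j * (w i \<bullet> w j))"
          using cons pP by blast
        have a0ge: "a0 \<ge> 0" using a0(1) by simp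
        have main: "(\<Sum>i<m. 2 * (orth_proj (V i) (e i t) \<bullet> orth_proj (V i) (A *v e i t + L i (e i t) - g *\<^sub>R orth_proj (V i) (e i t - (\<Sum>j<m. Smat E m (\<sigma> t) i j *\<^sub>R e j t))))
             + 2 * \<rho> * Bf i (e i t - orth_proj (V i) (e i t)) ((A *v e i t + L i (e i t) - g *\<^sub>R orth_proj (V i) (e i t - (\<Sum>j<m. Smat E m (\<sigma> t) i j *\<^sub>R e j t)))
                  - orth_proj (V i) (A *v e i t + L i (e i t) - g *\<^sub>R orth_proj (V i) (e i t - (\<Sum>j<m. Smat E m (\<sigma> t) i j *\<^sub>R e j t)))))
         \<le> - 2 * lam * (\<Sum>i<m. orth_proj (V i) (e i t) \<bullet> orth_proj (V i) (e i t)
             + \<rho> * Bf i (e i t - orth_proj (V i) (e i t)) (e i t - orth_proj (V i) (e i t)))"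
          by (rule decay_ineq[where m=m and V=V and A=A and L=L and B=Bf and S="Smat E m (\<sigma> t)" and e="\<lambda>i. e i t"
                and \<alpha>=\<alpha> and \<beta>=\<beta> and aA=a0 and lam=lam and g=g and \<rho>=\<rho>, OF m0 f_sub f_Ainv f_Llin f_Lker f_LX a0(2) a0ge f_Bbil f_Bpos \<alpha> f_Bdec f_cons
                Smat_nonneg Smat_le g \<rho>])
        have "W' t = (\<Sum>i<m. 2 * (orth_proj (V i) (e i t) \<bullet> orth_proj (V i) (A *v e i t + L i (e i t) - g *\<^sub>R orth_proj (V i) (e i t - (\<Sum>j<m. Smat E m (\<sigma> t) i j *\<^sub>R e j t))))
             + 2 * \<rho> * Bf i (e i t - orth_proj (V i) (e i t)) ((A *v e i t + L i (e i t) - g *\<^sub>R orth_proj (V i) (e i t - (\<Sum>j<m. Smat E m (\<sigma> t) i j *\<^sub>R e j t)))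
                  - orth_proj (V i) (A *v e i t + L i (e i t) - g *\<^sub>R orth_proj (V i) (e i t - (\<Sum>j<m. Smat E m (\<sigma> t) i j *\<^sub>R e j t)))))"
          unfolding W'_def by (rule sum.cong) (simp_all add: edd)
        moreover have "W t = (\<Sum>i<m. orth_proj (V i) (e i t) \<bullet> orth_proj (V i) (e i t)
             + \<rho> * Bf i (e i t - orth_proj (V i) (e i t)) (e i t - orth_proj (V i) (e i t)))"
          unfolding W_def Wf_def ..
        ultimately show ?thesis using main by simp
      qed
      define f where "f t = exp (2 * lam * t) * W t" for t
      define f' where "f' t = exp (2 * lam * t) * (2 * lam) * W t + W' t * exp (2 * lam * t)" for t
      have cf: "continuous_on {0..} f" unfolding f_def[abs_def] by (intro continuous_intros cW)
      have df: "(f has_real_derivative f' \<tau>) (at \<tau> within {\<tau>..})" if "\<tau> \<ge> 0" for \<tau>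
      proof -
        have dexp: "((\<lambda>t. exp (2 * lam * t)) has_real_derivative exp (2 * lam * \<tau>) * (2 * lam)) (at \<tau> within {\<tau>..})"
          by (auto intro!: derivative_eq_intros)
        show ?thesis unfolding f_def[abs_def] f'_def using DERIV_mult[OF dexp dW[OF that]] .
      qed
      have fneg: "f' \<tau> \<le> 0" if "\<tau> \<ge> 0" for \<tau>
      proof -
        have "f' \<tau> = exp (2 * lam * \<tau>) * (2 * lam * W \<tau> + W' \<tau>)" unfolding f'_def by (simp add: algebra_simps)
        moreover have "2 * lam * W \<tau> + W' \<tau> \<le> 0" using dec[OF that] by simp
        ultimately show ?thesis by (simp add: mult_nonneg_nonpos)
      qed
      have "f t \<le> f 0" by (rule dini[OF cf df fneg t])
      then have Wt: "exp (2 * lam * t) * W t \<le> W 0" unfolding f_def by simp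
      have Wt': "W t \<le> exp (- 2 * lam * t) * W 0"
      proof -
        have "W t = exp (- 2 * lam * t) * (exp (2 * lam * t) * W t)" by (simp add: exp_minus field_simps)
        also have "\<dots> \<le> exp (- 2 * lam * t) * W 0" using Wt by (intro mult_left_mono) auto
        finally show ?thesis .
      qed
      define E2 where "E2 t = (\<Sum>i<m. (norm (e i t))^2)" for t
      have lo_t: "lo * E2 t \<le> W t" unfolding E2_def W_def using Wbounds[of "\<lambda>i. e i t"] by simp
      have hi_0: "W 0 \<le> hi * E2 0" unfolding E2_def W_def using Wbounds[of "\<lambda>i. e i 0"] by simp
      have "lo * E2 t \<le> exp (- 2 * lam * t) * (hi * E2 0)"
        using lo_t Wt' hi_0 by (meson exp_ge_zero mult_left_mono order_trans)
      then have E2t: "E2 t \<le> (hi / lo) * exp (- 2 * lam * t) * E2 0" using lo by (simp add: field_simps)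
      have e2: "exp (- 2 * lam * t) = (exp (- lam * t))^2" by (simp add: power2_eq_square exp_add[symmetric])
      have "err_norm m x xs t = sqrt (E2 t)" unfolding err_norm_def E2_def e_def ..
      also have "\<dots> \<le> sqrt ((hi / lo) * exp (- 2 * lam * t) * E2 0)" using E2t by (rule real_sqrt_le_mono)
      also have "\<dots> = sqrt (hi / lo) * exp (- lam * t) * sqrt (E2 0)" unfolding e2 real_sqrt_mult by simp
      also have "sqrt (E2 0) = err_norm m x xs 0" unfolding err_norm_def E2_def e_def ..
      finally show "err_norm m x xs t \<le> sqrt (hi / lo) * exp (- lam * t) * err_norm m x xs 0" .
    qed
  qed
qed


end
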